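(* Let $L\subseteq G_3$ be the subgroup of elements that fix every edge sticker and send every corner cubelet back to its own position. Let $\sigma:S_8\to S_{12}$ be the sign map sending even permutations to the identity and odd permutations to the transposition $(b\,c)$ of the edge positions $b,c$, and let $S=\{(\sigma(p),p):p\in S_8\}\subseteq S_{12}\times S_8$. Then $G_3$ contains a subgroup of the form $L\rtimes Q_S$, where $Q_S\subseteq G_3$ is a subgroup with $Q_S\cap\ker\alpha=1$ and $\alpha(Q_S)=S$, and $\psi$ restricts to an isomorphism from $L\rtimes Q_S$ onto $G_2$. In particular the surjection $\psi:G_3\to G_2$ splits and $G_2$ is isomorphic to a subgroup of $G_3$.
   Context: The $3\times3\times3$ Rubik's cube consists of 8 corner cubelets (3 stickers each), 12 edge cubelets (2 stickers each) and 6 face-center cubelets. Corner positions are numbered 1 = top-front-left, 2 = top-front-right, 3 = top-back-left, 4 = top-back-right, 5 = bottom-front-left, 6 = bottom-front-right, 7 = bottom-back-left, 8 = bottom-back-right; edge positions are labeled $a$ = top-back, $b$ = top-right, $c$ = top-front, $d$ = top-left, $e$ = back-left, $f$ = back-right, $g$ = front-right, $h$ = front-left, $i$ = bottom-back, $j$ = bottom-right, $k$ = bottom-front, $l$ = bottom-left. $G_3$ is the group of permutations of the 48 corner and edge stickers generated by the six moves $u_3,d_3,f_3,b_3,l_3,r_3$, which rotate respectively the top, bottom, front, back, left, right layer of nine cubelets by $90^\circ$ clockwise as seen by an observer outside the cube facing that face. The $2\times2\times2$ cube has 8 corner cubelets (24 stickers) with the same corner numbering, and $G_2$ is the group of permutations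 of its 24 stickers generated by the analogous face quarter-turns $u_2,d_2,f_2,b_2,l_2,r_2$. $\psi:G_3\to G_2$ is the (surjective) homomorphism with $u_3\mapsto u_2$, $d_3\mapsto d_2$, etc. (it records the action on the corner stickers). $\phi:G_2\to S_8$ records the permutation of corner positions, $\beta:G_3\to S_{12}$ records the permutation of the edge positions $\{a,\dots,l\}$, and $\alpha=(\beta,\phi\circ\psi):G_3\to S_{12}\times S_8$. *)

theory Defs
  imports "HOL-Algebra.Algebra" "HOL-Combinatorics.Permutations" "HOL-Combinatorics.Transposition"
begin

text \<open>A cubelet position is a point of {-1,0,1}^3
  (x = right, y = up, z = front). A sticker is a pair (p, n) of a cubelet position p
  and an outward unit axis vector n with p . n = 1 (the face of cubelet p the sticker lies on).\<close>

type_synonym vec = "int \<times> int \<times> int"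
type_synonym sticker = "vec \<times> vec"

fun dotv :: "vec \<Rightarrow> vec \<Rightarrow> int" where
  "dotv (a1,a2,a3) (b1,b2,b3) = a1*b1 + a2*b2 + a3*b3"

fun crossv :: "vec \<Rightarrow> vec \<Rightarrow> vec" where
  "crossv (a1,a2,a3) (b1,b2,b3) = (a2*b3 - a3*b2, a3*b1 - a1*b3, a1*b2 - a2*b1)"

fun scalev :: "int \<Rightarrow> vec \<Rightarrow> vec" where
  "scalev c (b1,b2,b3) = (c*b1, c*b2, c*b3)"

fun subv :: "vec \<Rightarrow> vec \<Rightarrow> vec" where
  "subv (a1,a2,a3) (b1,b2,b3) = (a1-b1, a2-b2, a3-b3)"

text \<open>Rotation by 90 degrees clockwise as seen by an observer outside the cube on the
  side of the unit axis d, looking at the cube (i.e. by -90 degrees about d, right-hand rule):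
  v |-> d (d.v) - d x v.\<close>
definition rot :: "vec \<Rightarrow> vec \<Rightarrow> vec" where
  "rot d v = subv (scalev (dotv d v) d) (crossv d v)"

definition axes :: "vec set" where
  "axes = {(1,0,0), (-1,0,0), (0,1,0), (0,-1,0), (0,0,1), (0,0,-1)}"

definition cube_pos :: "vec set" where
  "cube_pos = {(x,y,z). x \<in> {-1,0,1} \<and> y \<in> {-1,0,1} \<and> z \<in> {-1,0,1}}"

fun nonzeros :: "vec \<Rightarrow> nat" where
  "nonzeros (x,y,z) = (if x \<noteq> 0 then 1 else 0) + (if y \<noteq> 0 then 1 else 0) + (if z \<noteq> 0 then 1 else 0)"

definition corner_pos :: "vec set" where
  "corner_pos = {p \<in> cube_pos. nonzeros p = 3}"

definition edge_pos :: "vec set" where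
  "edge_pos = {p \<in> cube_pos. nonzeros p = 2}"

text \<open>Named positions. Corners: 1 = top-front-left, ..., edges a..l as in the paper.\<close>
definition "edge_b = ((1,1,0) :: vec)"
definition "edge_c = ((0,1,1) :: vec)"

text \<open>The 48 corner and edge stickers of the 3x3x3 cube, and the 24 stickers of the
  2x2x2 cube (modelled, with the same corner numbering, as the corner stickers).\<close>
definition stickers3 :: "sticker set" where
  "stickers3 = {(p,n). p \<in> corner_pos \<union> edge_pos \<and> n \<in> axes \<and> dotv p n = 1}"

definition stickers2 :: "sticker set" where
  "stickers2 = {(p,n). p \<in> corner_pos \<and> n \<in> axes \<and> dotv p n = 1}"

definition face_move :: "sticker set \<Rightarrow> vec \<Rightarrow> sticker \<Rightarrow> sticker" where
  "face_move S d = (\<lambda>s \<in> S. if dotv (fst s) d = 1 then (rot d (fst s), rot d (snd s)) else s)"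

definition "U_ax = ((0,1,0) :: vec)"
definition "D_ax = ((0,-1,0) :: vec)"
definition "F_ax = ((0,0,1) :: vec)"
definition "B_ax = ((0,0,-1) :: vec)"
definition "L_ax = ((-1,0,0) :: vec)"
definition "R_ax = ((1,0,0) :: vec)"

definition moves :: "sticker set \<Rightarrow> (sticker \<Rightarrow> sticker) set" where
  "moves S = face_move S ` {U_ax, D_ax, F_ax, B_ax, L_ax, R_ax}"

definition G3 :: "(sticker \<Rightarrow> sticker) monoid" where
  "G3 = subgroup_generated (BijGroup stickers3) (moves stickers3)"

definition G2 :: "(sticker \<Rightarrow> sticker) monoid" where
  "G2 = subgroup_generated (BijGroup stickers2) (moves stickers2)"

definition psi :: "(sticker \<Rightarrow> sticker) \<Rightarrow> (sticker \<Rightarrow> sticker)" where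
  "psi g = (\<lambda>s \<in> stickers2. g s)"

definition pos_perm :: "vec set \<Rightarrow> (sticker \<Rightarrow> sticker) \<Rightarrow> vec \<Rightarrow> vec" where
  "pos_perm P g p = (if p \<in> P then fst (g (p, SOME n. n \<in> axes \<and> dotv p n = 1)) else p)"

definition beta :: "(sticker \<Rightarrow> sticker) \<Rightarrow> vec \<Rightarrow> vec" where
  "beta g = pos_perm edge_pos g"

definition phi :: "(sticker \<Rightarrow> sticker) \<Rightarrow> vec \<Rightarrow> vec" where
  "phi h = pos_perm corner_pos h"

definition alpha :: "(sticker \<Rightarrow> sticker) \<Rightarrow> (vec \<Rightarrow> vec) \<times> (vec \<Rightarrow> vec)" where
  "alpha g = (beta g, phi (psi g))"

definition ker_alpha :: "(sticker \<Rightarrow> sticker) set" where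
  "ker_alpha = {g \<in> carrier G3. alpha g = (id, id)}"

definition sigma :: "(vec \<Rightarrow> vec) \<Rightarrow> (vec \<Rightarrow> vec)" where
  "sigma p = (if evenperm p then id else transpose edge_b edge_c)"

definition S_set :: "((vec \<Rightarrow> vec) \<times> (vec \<Rightarrow> vec)) set" where
  "S_set = {(sigma p, p) | p. p permutes corner_pos}"

definition L_grp :: "(sticker \<Rightarrow> sticker) set" where
  "L_grp = {g \<in> carrier G3. (\<forall>s \<in> stickers3. fst s \<in> edge_pos \<longrightarrow> g s = s)
                         \<and> (\<forall>s \<in> stickers3. fst s \<in> corner_pos \<longrightarrow> fst (g s) = fst s)}"

end

theory Submission
  imports Defs
begin

datatype c48 = C0 | C1 | C2 | C3 | C4 | C5 | C6 | C7 | C8 | C9 | C10 | C11 | C12 | C13 | C14 | C15 | C16 | C17 | C18 | C19 | C20 | C21 | C22 | C23 | C24 | C25 | C26 | C27 | C28 | C29 | C30 | C31 | C32 | C33 | C34 | C35 | C36 | C37 | C38 | C39 | C40 | C41 | C42 | C43 | C44 | C45 | C46 | C47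

primrec cst :: "c48 \<Rightarrow> sticker" where
  "cst C0 = (((-1),(-1),(-1)),((-1),0,0))"
| "cst C1 = (((-1),(-1),(-1)),(0,(-1),0))"
| "cst C2 = (((-1),(-1),(-1)),(0,0,(-1)))"
| "cst C3 = (((-1),(-1),1),((-1),0,0))"
| "cst C4 = (((-1),(-1),1),(0,(-1),0))"
| "cst C5 = (((-1),(-1),1),(0,0,1))"
| "cst C6 = (((-1),1,(-1)),((-1),0,0))"
| "cst C7 = (((-1),1,(-1)),(0,1,0))"
| "cst C8 = (((-1),1,(-1)),(0,0,(-1)))"
| "cst C9 = (((-1),1,1),((-1),0,0))"
| "cst C10 = (((-1),1,1),(0,1,0))"
| "cst C11 = (((-1),1,1),(0,0,1))"
| "cst C12 = ((1,(-1),(-1)),(1,0,0))"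
| "cst C13 = ((1,(-1),(-1)),(0,(-1),0))"
| "cst C14 = ((1,(-1),(-1)),(0,0,(-1)))"
| "cst C15 = ((1,(-1),1),(1,0,0))"
| "cst C16 = ((1,(-1),1),(0,(-1),0))"
| "cst C17 = ((1,(-1),1),(0,0,1))"
| "cst C18 = ((1,1,(-1)),(1,0,0))"
| "cst C19 = ((1,1,(-1)),(0,1,0))"
| "cst C20 = ((1,1,(-1)),(0,0,(-1)))"
| "cst C21 = ((1,1,1),(1,0,0))"
| "cst C22 = ((1,1,1),(0,1,0))"
| "cst C23 = ((1,1,1),(0,0,1))"
| "cst C24 = (((-1),(-1),0),((-1),0,0))"
| "cst C25 = (((-1),(-1),0),(0,(-1),0))"
| "cst C26 = (((-1),0,(-1)),((-1),0,0))"
| "cst C27 = (((-1),0,(-1)),(0,0,(-1)))"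
| "cst C28 = (((-1),0,1),((-1),0,0))"
| "cst C29 = (((-1),0,1),(0,0,1))"
| "cst C30 = (((-1),1,0),((-1),0,0))"
| "cst C31 = (((-1),1,0),(0,1,0))"
| "cst C32 = ((0,(-1),(-1)),(0,(-1),0))"
| "cst C33 = ((0,(-1),(-1)),(0,0,(-1)))"
| "cst C34 = ((0,(-1),1),(0,(-1),0))"
| "cst C35 = ((0,(-1),1),(0,0,1))"
| "cst C36 = ((0,1,(-1)),(0,1,0))"
| "cst C37 = ((0,1,(-1)),(0,0,(-1)))"
| "cst C38 = ((0,1,1),(0,1,0))"
| "cst C39 = ((0,1,1),(0,0,1))"
| "cst C40 = ((1,(-1),0),(1,0,0))"
| "cst C41 = ((1,(-1),0),(0,(-1),0))"
| "cst C42 = ((1,0,(-1)),(1,0,0))"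
| "cst C43 = ((1,0,(-1)),(0,0,(-1)))"
| "cst C44 = ((1,0,1),(1,0,0))"
| "cst C45 = ((1,0,1),(0,0,1))"
| "cst C46 = ((1,1,0),(1,0,0))"
| "cst C47 = ((1,1,0),(0,1,0))"

definition allc :: "c48 list" where "allc = [C0,C1,C2,C3,C4,C5,C6,C7,C8,C9,C10,C11,C12,C13,C14,C15,C16,C17,C18,C19,C20,C21,C22,C23,C24,C25,C26,C27,C28,C29,C30,C31,C32,C33,C34,C35,C36,C37,C38,C39,C40,C41,C42,C43,C44,C45,C46,C47]"

primrec mvU :: "c48 \<Rightarrow> c48" where
  "mvU C0 = C0"
| "mvU C1 = C1"
| "mvU C2 = C2"
| "mvU C3 = C3"
| "mvU C4 = C4"
| "mvU C5 = C5"
| "mvU C6 = C20"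
| "mvU C7 = C19"
| "mvU C8 = C18"
| "mvU C9 = C8"
| "mvU C10 = C7"
| "mvU C11 = C6"
| "mvU C12 = C12"
| "mvU C13 = C13"
| "mvU C14 = C14"
| "mvU C15 = C15"
| "mvU C16 = C16"
| "mvU C17 = C17"
| "mvU C18 = C23"
| "mvU C19 = C22"
| "mvU C20 = C21"
| "mvU C21 = C11"
| "mvU C22 = C10"
| "mvU C23 = C9"
| "mvU C24 = C24"
| "mvU C25 = C25"
| "mvU C26 = C26"
| "mvU C27 = C27"
| "mvU C28 = C28"
| "mvU C29 = C29"
| "mvU C30 = C37"
| "mvU C31 = C36"
| "mvU C32 = C32"
| "mvU C33 = C33"
| "mvU C34 = C34"
| "mvU C35 = C35"
| "mvU C36 = C47"
| "mvU C37 = C46"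
| "mvU C38 = C31"
| "mvU C39 = C30"
| "mvU C40 = C40"
| "mvU C41 = C41"
| "mvU C42 = C42"
| "mvU C43 = C43"
| "mvU C44 = C44"
| "mvU C45 = C45"
| "mvU C46 = C39"
| "mvU C47 = C38"

primrec mvD :: "c48 \<Rightarrow> c48" where
  "mvD C0 = C5"
| "mvD C1 = C4"
| "mvD C2 = C3"
| "mvD C3 = C17"
| "mvD C4 = C16"
| "mvD C5 = C15"
| "mvD C6 = C6"
| "mvD C7 = C7"
| "mvD C8 = C8"
| "mvD C9 = C9"
| "mvD C10 = C10"
| "mvD C11 = C11"
| "mvD C12 = C2"
| "mvD C13 = C1"
| "mvD C14 = C0"
| "mvD C15 = C14"
| "mvD C16 = C13"
| "mvD C17 = C12"
| "mvD C18 = C18"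
| "mvD C19 = C19"
| "mvD C20 = C20"
| "mvD C21 = C21"
| "mvD C22 = C22"
| "mvD C23 = C23"
| "mvD C24 = C35"
| "mvD C25 = C34"
| "mvD C26 = C26"
| "mvD C27 = C27"
| "mvD C28 = C28"
| "mvD C29 = C29"
| "mvD C30 = C30"
| "mvD C31 = C31"
| "mvD C32 = C25"
| "mvD C33 = C24"
| "mvD C34 = C41"
| "mvD C35 = C40"
| "mvD C36 = C36"
| "mvD C37 = C37"
| "mvD C38 = C38"
| "mvD C39 = C39"
| "mvD C40 = C33"
| "mvD C41 = C32"
| "mvD C42 = C42"
| "mvD C43 = C43"
| "mvD C44 = C44"
| "mvD C45 = C45"
| "mvD C46 = C46"
| "mvD C47 = C47"

primrec mvF :: "c48 \<Rightarrow> c48" where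
  "mvF C0 = C0"
| "mvF C1 = C1"
| "mvF C2 = C2"
| "mvF C3 = C10"
| "mvF C4 = C9"
| "mvF C5 = C11"
| "mvF C6 = C6"
| "mvF C7 = C7"
| "mvF C8 = C8"
| "mvF C9 = C22"
| "mvF C10 = C21"
| "mvF C11 = C23"
| "mvF C12 = C12"
| "mvF C13 = C13"
| "mvF C14 = C14"
| "mvF C15 = C4"
| "mvF C16 = C3"
| "mvF C17 = C5"
| "mvF C18 = C18"
| "mvF C19 = C19"
| "mvF C20 = C20"
| "mvF C21 = C16"
| "mvF C22 = C15"
| "mvF C23 = C17"
| "mvF C24 = C24"
| "mvF C25 = C25"
| "mvF C26 = C26"
| "mvF C27 = C27"
| "mvF C28 = C38"
| "mvF C29 = C39"
| "mvF C30 = C30"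
| "mvF C31 = C31"
| "mvF C32 = C32"
| "mvF C33 = C33"
| "mvF C34 = C28"
| "mvF C35 = C29"
| "mvF C36 = C36"
| "mvF C37 = C37"
| "mvF C38 = C44"
| "mvF C39 = C45"
| "mvF C40 = C40"
| "mvF C41 = C41"
| "mvF C42 = C42"
| "mvF C43 = C43"
| "mvF C44 = C34"
| "mvF C45 = C35"
| "mvF C46 = C46"
| "mvF C47 = C47"

primrec mvB :: "c48 \<Rightarrow> c48" where
  "mvB C0 = C13"
| "mvB C1 = C12"
| "mvB C2 = C14"
| "mvB C3 = C3"
| "mvB C4 = C4"
| "mvB C5 = C5"
| "mvB C6 = C1"
| "mvB C7 = C0"
| "mvB C8 = C2"
| "mvB C9 = C9"
| "mvB C10 = C10"
| "mvB C11 = C11"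
| "mvB C12 = C19"
| "mvB C13 = C18"
| "mvB C14 = C20"
| "mvB C15 = C15"
| "mvB C16 = C16"
| "mvB C17 = C17"
| "mvB C18 = C7"
| "mvB C19 = C6"
| "mvB C20 = C8"
| "mvB C21 = C21"
| "mvB C22 = C22"
| "mvB C23 = C23"
| "mvB C24 = C24"
| "mvB C25 = C25"
| "mvB C26 = C32"
| "mvB C27 = C33"
| "mvB C28 = C28"
| "mvB C29 = C29"
| "mvB C30 = C30"
| "mvB C31 = C31"
| "mvB C32 = C42"
| "mvB C33 = C43"
| "mvB C34 = C34"
| "mvB C35 = C35"
| "mvB C36 = C26"
| "mvB C37 = C27"
| "mvB C38 = C38"
| "mvB C39 = C39"
| "mvB C40 = C40"
| "mvB C41 = C41"
| "mvB C42 = C36"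
| "mvB C43 = C37"
| "mvB C44 = C44"
| "mvB C45 = C45"
| "mvB C46 = C46"
| "mvB C47 = C47"

primrec mvL :: "c48 \<Rightarrow> c48" where
  "mvL C0 = C6"
| "mvL C1 = C8"
| "mvL C2 = C7"
| "mvL C3 = C0"
| "mvL C4 = C2"
| "mvL C5 = C1"
| "mvL C6 = C9"
| "mvL C7 = C11"
| "mvL C8 = C10"
| "mvL C9 = C3"
| "mvL C10 = C5"
| "mvL C11 = C4"
| "mvL C12 = C12"
| "mvL C13 = C13"
| "mvL C14 = C14"
| "mvL C15 = C15"
| "mvL C16 = C16"
| "mvL C17 = C17"
| "mvL C18 = C18"
| "mvL C19 = C19"
| "mvL C20 = C20"
| "mvL C21 = C21"
| "mvL C22 = C22"
| "mvL C23 = C23"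
| "mvL C24 = C26"
| "mvL C25 = C27"
| "mvL C26 = C30"
| "mvL C27 = C31"
| "mvL C28 = C24"
| "mvL C29 = C25"
| "mvL C30 = C28"
| "mvL C31 = C29"
| "mvL C32 = C32"
| "mvL C33 = C33"
| "mvL C34 = C34"
| "mvL C35 = C35"
| "mvL C36 = C36"
| "mvL C37 = C37"
| "mvL C38 = C38"
| "mvL C39 = C39"
| "mvL C40 = C40"
| "mvL C41 = C41"
| "mvL C42 = C42"
| "mvL C43 = C43"
| "mvL C44 = C44"
| "mvL C45 = C45"
| "mvL C46 = C46"
| "mvL C47 = C47"

primrec mvR :: "c48 \<Rightarrow> c48" where
  "mvR C0 = C0"
| "mvR C1 = C1"
| "mvR C2 = C2"
| "mvR C3 = C3"
| "mvR C4 = C4"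
| "mvR C5 = C5"
| "mvR C6 = C6"
| "mvR C7 = C7"
| "mvR C8 = C8"
| "mvR C9 = C9"
| "mvR C10 = C10"
| "mvR C11 = C11"
| "mvR C12 = C15"
| "mvR C13 = C17"
| "mvR C14 = C16"
| "mvR C15 = C21"
| "mvR C16 = C23"
| "mvR C17 = C22"
| "mvR C18 = C12"
| "mvR C19 = C14"
| "mvR C20 = C13"
| "mvR C21 = C18"
| "mvR C22 = C20"
| "mvR C23 = C19"
| "mvR C24 = C24"
| "mvR C25 = C25"
| "mvR C26 = C26"
| "mvR C27 = C27"
| "mvR C28 = C28"
| "mvR C29 = C29"
| "mvR C30 = C30"
| "mvR C31 = C31"
| "mvR C32 = C32"
| "mvR C33 = C33"
| "mvR C34 = C34"
| "mvR C35 = C35"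
| "mvR C36 = C36"
| "mvR C37 = C37"
| "mvR C38 = C38"
| "mvR C39 = C39"
| "mvR C40 = C44"
| "mvR C41 = C45"
| "mvR C42 = C40"
| "mvR C43 = C41"
| "mvR C44 = C46"
| "mvR C45 = C47"
| "mvR C46 = C42"
| "mvR C47 = C43"

datatype mv = NU | ND | NF | NB | NL | NR

fun mvc :: "mv \<Rightarrow> c48 \<Rightarrow> c48" where
  "mvc NU c = mvU c"
| "mvc ND c = mvD c"
| "mvc NF c = mvF c"
| "mvc NB c = mvB c"
| "mvc NL c = mvL c"
| "mvc NR c = mvR c"

fun axm :: "mv \<Rightarrow> vec" where
  "axm NU = U_ax"
| "axm ND = D_ax"
| "axm NF = F_ax"
| "axm NB = B_ax"
| "axm NL = L_ax"
| "axm NR = R_ax"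

primrec nxtc :: "c48 \<Rightarrow> c48" where
  "nxtc C0 = C2"
| "nxtc C1 = C0"
| "nxtc C2 = C1"
| "nxtc C3 = C4"
| "nxtc C4 = C5"
| "nxtc C5 = C3"
| "nxtc C6 = C7"
| "nxtc C7 = C8"
| "nxtc C8 = C6"
| "nxtc C9 = C11"
| "nxtc C10 = C9"
| "nxtc C11 = C10"
| "nxtc C12 = C13"
| "nxtc C13 = C14"
| "nxtc C14 = C12"
| "nxtc C15 = C17"
| "nxtc C16 = C15"
| "nxtc C17 = C16"
| "nxtc C18 = C20"
| "nxtc C19 = C18"
| "nxtc C20 = C19"
| "nxtc C21 = C22"
| "nxtc C22 = C23"
| "nxtc C23 = C21"
| "nxtc C24 = C25"
| "nxtc C25 = C24"
| "nxtc C26 = C27"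
| "nxtc C27 = C26"
| "nxtc C28 = C29"
| "nxtc C29 = C28"
| "nxtc C30 = C31"
| "nxtc C31 = C30"
| "nxtc C32 = C33"
| "nxtc C33 = C32"
| "nxtc C34 = C35"
| "nxtc C35 = C34"
| "nxtc C36 = C37"
| "nxtc C37 = C36"
| "nxtc C38 = C39"
| "nxtc C39 = C38"
| "nxtc C40 = C41"
| "nxtc C41 = C40"
| "nxtc C42 = C43"
| "nxtc C43 = C42"
| "nxtc C44 = C45"
| "nxtc C45 = C44"
| "nxtc C46 = C47"
| "nxtc C47 = C46"

definition qw0 :: "mv list" where "qw0 = [NB,NU,ND,NR,ND,ND,ND,NR,NR,NR,ND,NR,ND,ND,ND,NR,NR,NR,NU,NR,NR,NR,NR,NR,NR,NR,NR,NR,ND,ND,ND,ND,ND,ND,ND,ND,ND,NR,NR,NR,ND,ND,ND,NR,NR,NR,NR,NR,NR,NR,NR,NR,ND,ND,ND,ND,ND,ND,ND,ND,ND,NR,NR,NR,ND,ND,ND,NU,NU,NU,NU,NU,NU,NB,NB,NB,NF,NF,NL,NF,NF,NL,NB,NU,NU,NU,NR,NR,NR,NU,NU,NU,NR,NR,NF,NR,NR,NR,NU,NU,NU,NR,NR,NR,NU,NR,NF,NF,NF,NR,NR,NR,NU,NR,NB,NB,NB,NL,NL,NL,NF,NF,NF,NF,NF,NF,NL,NL,NL,NF,NF,NF,NF,NF,NF]"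

definition qw1 :: "mv list" where "qw1 = [NL,NB,NF,ND,NF,NL,NF,NF,NU,NU,NU,NR,NR,NR,NU,NU,NU,NR,NR,NF,NR,NR,NR,NU,NU,NU,NR,NR,NR,NU,NR,NF,NF,NF,NR,NR,NR,NU,NR,NF,NF,NF,NF,NF,NF,NL,NL,NL,NF,NF,NF,ND,ND,ND,NF,NF,NF,NB,NB,NB,NL,NL,NL]"

definition qw2 :: "mv list" where "qw2 = [NB,NR,ND,NR,ND,ND,ND,NR,NR,NR,ND,NR,ND,ND,ND,NR,NR,NR,NU,NR,NR,NR,NR,NR,NR,NR,NR,NR,ND,ND,ND,ND,ND,ND,ND,ND,ND,NR,NR,NR,ND,ND,ND,NR,NR,NR,NR,NR,NR,NR,NR,NR,ND,ND,ND,ND,ND,ND,ND,ND,ND,NR,NR,NR,ND,ND,ND,NU,NU,NU,NR,NR,NR,NB,NB,NB,NB,NF,ND,NF,NL,NF,NF,NU,NU,NU,NR,NR,NR,NU,NU,NU,NR,NR,NF,NR,NR,NR,NU,NU,NU,NR,NR,NR,NU,NR,NF,NF,NF,NR,NR,NR,NU,NR,NF,NF,NF,NF,NF,NF,NL,NL,NL,NF,NF,NF,ND,ND,ND,NF,NF,NF,NB,NB,NB]"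

definition qw3 :: "mv list" where "qw3 = [NL,NB,NF,NF,NL,NF,NF,NU,NU,NU,NR,NR,NR,NU,NU,NU,NR,NR,NF,NR,NR,NR,NU,NU,NU,NR,NR,NR,NU,NR,NF,NF,NF,NR,NR,NR,NU,NR,NF,NF,NF,NF,NF,NF,NL,NL,NL,NF,NF,NF,NF,NF,NF,NB,NB,NB,NL,NL,NL]"

definition qw4 :: "mv list" where "qw4 = [ND,NU,NL,ND,NR,ND,ND,ND,NR,NR,NR,ND,NR,ND,ND,ND,NR,NR,NR,NU,NR,NR,NR,NR,NR,NR,NR,NR,NR,ND,ND,ND,ND,ND,ND,ND,ND,ND,NR,NR,NR,ND,ND,ND,NR,NR,NR,NR,NR,NR,NR,NR,NR,ND,ND,ND,ND,ND,ND,ND,ND,ND,NR,NR,NR,ND,ND,ND,NU,NU,NU,NL,NL,NL,NU,NU,NU,ND,ND,ND,NF,ND,NF,NL,NB,NF,NF,NU,NU,NU,NR,NR,NR,NU,NU,NU,NR,NR,NF,NR,NR,NR,NU,NU,NU,NR,NR,NR,NU,NR,NF,NF,NF,NR,NR,NR,NU,NR,NF,NF,NF,NF,NF,NF,NB,NB,NB,NL,NL,NL,NF,NF,NF,ND,ND,ND,NF,NF,NF]"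

definition qw5 :: "mv list" where "qw5 = [NF,ND,NF,NL,NF,NF,NU,NU,NU,NR,NR,NR,NU,NU,NU,NR,NR,NF,NR,NR,NR,NU,NU,NU,NR,NR,NR,NU,NR,NF,NF,NF,NR,NR,NR,NU,NR,NF,NF,NF,NF,NF,NF,NL,NL,NL,NF,NF,NF,ND,ND,ND,NF,NF,NF]"

definition qw6 :: "mv list" where "qw6 = [ND,NR,ND,ND,ND,NR,NR,NR,ND,NR,ND,ND,ND,NR,NR,NR,NU,NR,NR,NR,NR,NR,NR,NR,NR,NR,ND,ND,ND,ND,ND,ND,ND,ND,ND,NR,NR,NR,ND,ND,ND,NR,NR,NR,NR,NR,NR,NR,NR,NR,ND,ND,ND,ND,ND,ND,ND,ND,ND,NR,NR,NR,ND,ND,ND,NU,NU,NU,NL,NB,NU,NU,NU,NR,NR,NR,NU,NU,NU,NR,NR,NF,NR,NR,NR,NU,NU,NU,NR,NR,NR,NU,NR,NF,NF,NF,NR,NR,NR,NU,NR,NB,NB,NB,NL,NL,NL]"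

definition qpairs :: "(mv list \<times> vec) list" where "qpairs = [(qw0,((-1),(-1),(-1))),(qw1,((-1),(-1),1)),(qw2,((-1),1,(-1))),(qw3,(1,(-1),(-1))),(qw4,(1,(-1),1)),(qw5,(1,1,(-1))),(qw6,(1,1,1))]"

definition lwU :: "mv list" where "lwU = []"

definition lwD :: "mv list" where "lwD = []"

definition lwF :: "mv list" where "lwF = [NF,ND,NR,ND,ND,ND,NR,NR,NR,ND,NR,ND,ND,ND,NR,NR,NR,NU,NR,NR,NR,NR,NR,NR,NR,NR,NR,ND,ND,ND,ND,ND,ND,ND,ND,ND,NR,NR,NR,ND,ND,ND,NR,NR,NR,NR,NR,NR,NR,NR,NR,ND,ND,ND,ND,ND,ND,ND,ND,ND,NR,NR,NR,ND,ND,ND,NU,NU,NU,NF,NF,NF,NU,NL,ND,NR,ND,ND,ND,NR,NR,NR,ND,NR,ND,ND,ND,NR,NR,NR,NU,NR,NR,NR,NR,NR,NR,NR,NR,NR,ND,ND,ND,ND,ND,ND,ND,ND,ND,NR,NR,NR,ND,ND,ND,NR,NR,NR,NR,NR,NR,NR,NR,NR,ND,ND,ND,ND,ND,ND,ND,ND,ND,NR,NR,NR,ND,ND,ND,NU,NU,NU,NL,NL,NL,NU,NU,NU]"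

definition lwB :: "mv list" where "lwB = [NB,NU,NU,ND,NR,ND,ND,ND,NR,NR,NR,ND,NR,ND,ND,ND,NR,NR,NR,NU,NR,NR,NR,NR,NR,NR,NR,NR,NR,ND,ND,ND,ND,ND,ND,ND,ND,ND,NR,NR,NR,ND,ND,ND,NR,NR,NR,NR,NR,NR,NR,NR,NR,ND,ND,ND,ND,ND,ND,ND,ND,ND,NR,NR,NR,ND,ND,ND,NU,NU,NU,NU,NU,NU,NU,NU,NU,NB,NB,NB,NR,NR,NF,ND,NR,ND,ND,ND,NR,NR,NR,ND,NR,ND,ND,ND,NR,NR,NR,NU,NR,NR,NR,NR,NR,NR,NR,NR,NR,ND,ND,ND,ND,ND,ND,ND,ND,ND,NR,NR,NR,ND,ND,ND,NR,NR,NR,NR,NR,NR,NR,NR,NR,ND,ND,ND,ND,ND,ND,ND,ND,ND,NR,NR,NR,ND,ND,ND,NU,NU,NU,NF,NF,NF,NR,NR,NR,NR,NR,NR]"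

definition lwL :: "mv list" where "lwL = [NL,NU,ND,NR,ND,ND,ND,NR,NR,NR,ND,NR,ND,ND,ND,NR,NR,NR,NU,NR,NR,NR,NR,NR,NR,NR,NR,NR,ND,ND,ND,ND,ND,ND,ND,ND,ND,NR,NR,NR,ND,ND,ND,NR,NR,NR,NR,NR,NR,NR,NR,NR,ND,ND,ND,ND,ND,ND,ND,ND,ND,NR,NR,NR,ND,ND,ND,NU,NU,NU,NU,NU,NU,NL,NL,NL,NU,NB,NU,ND,NR,ND,ND,ND,NR,NR,NR,ND,NR,ND,ND,ND,NR,NR,NR,NU,NR,NR,NR,NR,NR,NR,NR,NR,NR,ND,ND,ND,ND,ND,ND,ND,ND,ND,NR,NR,NR,ND,ND,ND,NR,NR,NR,NR,NR,NR,NR,NR,NR,ND,ND,ND,ND,ND,ND,ND,ND,ND,NR,NR,NR,ND,ND,ND,NU,NU,NU,NU,NU,NU,NB,NB,NB,NU,NU,NU]"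

definition lwR :: "mv list" where "lwR = [NR,NF,ND,NR,ND,ND,ND,NR,NR,NR,ND,NR,ND,ND,ND,NR,NR,NR,NU,NR,NR,NR,NR,NR,NR,NR,NR,NR,ND,ND,ND,ND,ND,ND,ND,ND,ND,NR,NR,NR,ND,ND,ND,NR,NR,NR,NR,NR,NR,NR,NR,NR,ND,ND,ND,ND,ND,ND,ND,ND,ND,NR,NR,NR,ND,ND,ND,NU,NU,NU,NF,NF,NF,NR,NR,NR,NF,ND,NF,ND,NR,ND,ND,ND,NR,NR,NR,ND,NR,ND,ND,ND,NR,NR,NR,NU,NR,NR,NR,NR,NR,NR,NR,NR,NR,ND,ND,ND,ND,ND,ND,ND,ND,ND,NR,NR,NR,ND,ND,ND,NR,NR,NR,NR,NR,NR,NR,NR,NR,ND,ND,ND,ND,ND,ND,ND,ND,ND,NR,NR,NR,ND,ND,ND,NU,NU,NU,NF,NF,NF,ND,ND,ND,NF,NF,NF]"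

fun lwm :: "mv \<Rightarrow> mv list" where
  "lwm NU = lwU"
| "lwm ND = lwD"
| "lwm NF = lwF"
| "lwm NB = lwB"
| "lwm NL = lwL"
| "lwm NR = lwR"

fun swm :: "mv \<Rightarrow> mv list list" where
  "swm NU = [qw6,qw5,qw2]"
| "swm ND = [qw0,qw3,qw4,qw1,qw0]"
| "swm NF = [qw1,qw4,qw6]"
| "swm NB = [qw0,qw2,qw5,qw3,qw0]"
| "swm NL = [qw2,qw0,qw1]"
| "swm NR = [qw3,qw5,qw6,qw4,qw3]"

primrec app_word :: "mv list \<Rightarrow> c48 \<Rightarrow> c48" where
  "app_word [] c = c"
| "app_word (m#w) c = mvc m (app_word w c)"

fun addv :: "vec \<Rightarrow> vec \<Rightarrow> vec" where
  "addv (a1,a2,a3) (b1,b2,b3) = (a1+b1, a2+b2, a3+b3)"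
fun halfv :: "vec \<Rightarrow> vec" where
  "halfv (a,b,c) = (a div 2, b div 2, c div 2)"

definition nxt :: "sticker \<Rightarrow> sticker" where
  "nxt s = (if nonzeros (fst s) = 3
     then (fst s, halfv (addv (subv (fst s) (snd s)) (crossv (fst s) (snd s))))
     else (fst s, subv (fst s) (snd s)))"

definition mark :: "sticker \<Rightarrow> bool" where
  "mark s = (snd s = (0,1,0) \<or> snd s = (0,-1,0) \<or>
     (nonzeros (fst s) = 2 \<and> fst (snd (fst s)) = 0 \<and> (snd s = (0,0,1) \<or> snd s = (0,0,-1))))"

fun markof :: "vec \<Rightarrow> sticker" where
  "markof (x,y,z) = (if y \<noteq> 0 then ((x,y,z), (0,y,0)) else ((x,y,z), (0,0,z)))"

definition iscorner :: "c48 \<Rightarrow> bool" where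
  "iscorner c = (nonzeros (fst (cst c)) = 3)"

definition c1v :: vec where "c1v = (-1,1,1)"

definition cl2 :: "vec list" where "cl2 = List.product [-1,0,1] (List.product [-1,0,1] [-1,0,1])"

definition ax_list :: "vec list" where
  "ax_list = [(1,0,0), (-1,0,0), (0,1,0), (0,-1,0), (0,0,1), (0,0,-1)]"

definition fmx :: "vec \<Rightarrow> sticker \<Rightarrow> sticker" where
  "fmx d s = (if dotv (fst s) d = 1 then (rot d (fst s), rot d (snd s)) else s)"

definition allm :: "mv list" where "allm = [NU,ND,NF,NB,NL,NR]"

definition Wq0 :: "c48 \<Rightarrow> c48" where "Wq0 c = mvc NB (mvc NU (mvc ND (mvc NR (mvc ND (mvc ND (mvc ND (mvc NR (mvc NR (mvc NR (mvc ND (mvc NR (mvc ND (mvc ND (mvc ND (mvc NR (mvc NR (mvc NR (mvc NU (mvc NR (mvc NR (mvc NR (mvc NR (mvc NR (mvc NR (mvc NR (mvc NR (mvc NR (mvc ND (mvc ND (mvc ND (mvc ND (mvc ND (mvc ND (mvc ND (mvc ND (mvc ND (mvc NR (mvc NR (mvc NR (mvc ND (mvc ND (mvc ND (mvc NR (mvc NR (mvc NR (mvc NR (mvc NR (mvc NR (mvc NR (mvc NR (mvc NR (mvc ND (mvc ND (mvc ND (mvc ND (mvc ND (mvc ND (mvc ND (mvc ND (mvc ND (mvc NR (mvc NR (mvc NR (mvc ND (mvc ND (mvc ND (mvc NU (mvc NU (mvc NU (mvc NU (mvc NU (mvc NU (mvc NB (mvc NB (mvc NB (mvc NF (mvc NF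 (mvc NL (mvc NF (mvc NF (mvc NL (mvc NB (mvc NU (mvc NU (mvc NU (mvc NR (mvc NR (mvc NR (mvc NU (mvc NU (mvc NU (mvc NR (mvc NR (mvc NF (mvc NR (mvc NR (mvc NR (mvc NU (mvc NU (mvc NU (mvc NR (mvc NR (mvc NR (mvc NU (mvc NR (mvc NF (mvc NF (mvc NF (mvc NR (mvc NR (mvc NR (mvc NU (mvc NR (mvc NB (mvc NB (mvc NB (mvc NL (mvc NL (mvc NL (mvc NF (mvc NF (mvc NF (mvc NF (mvc NF (mvc NF (mvc NL (mvc NL (mvc NL (mvc NF (mvc NF (mvc NF (mvc NF (mvc NF (mvc NF (c)))))))))))))))))))))))))))))))))))))))))))))))))))))))))))))))))))))))))))))))))))))))))))))))))))))))))))))))))))))))))))))))))))))))"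

definition Wq1 :: "c48 \<Rightarrow> c48" where "Wq1 c = mvc NL (mvc NB (mvc NF (mvc ND (mvc NF (mvc NL (mvc NF (mvc NF (mvc NU (mvc NU (mvc NU (mvc NR (mvc NR (mvc NR (mvc NU (mvc NU (mvc NU (mvc NR (mvc NR (mvc NF (mvc NR (mvc NR (mvc NR (mvc NU (mvc NU (mvc NU (mvc NR (mvc NR (mvc NR (mvc NU (mvc NR (mvc NF (mvc NF (mvc NF (mvc NR (mvc NR (mvc NR (mvc NU (mvc NR (mvc NF (mvc NF (mvc NF (mvc NF (mvc NF (mvc NF (mvc NL (mvc NL (mvc NL (mvc NF (mvc NF (mvc NF (mvc ND (mvc ND (mvc ND (mvc NF (mvc NF (mvc NF (mvc NB (mvc NB (mvc NB (mvc NL (mvc NL (mvc NL (c)))))))))))))))))))))))))))))))))))))))))))))))))))))))))))))))"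

definition Wq2 :: "c48 \<Rightarrow> c48" where "Wq2 c = mvc NB (mvc NR (mvc ND (mvc NR (mvc ND (mvc ND (mvc ND (mvc NR (mvc NR (mvc NR (mvc ND (mvc NR (mvc ND (mvc ND (mvc ND (mvc NR (mvc NR (mvc NR (mvc NU (mvc NR (mvc NR (mvc NR (mvc NR (mvc NR (mvc NR (mvc NR (mvc NR (mvc NR (mvc ND (mvc ND (mvc ND (mvc ND (mvc ND (mvc ND (mvc ND (mvc ND (mvc ND (mvc NR (mvc NR (mvc NR (mvc ND (mvc ND (mvc ND (mvc NR (mvc NR (mvc NR (mvc NR (mvc NR (mvc NR (mvc NR (mvc NR (mvc NR (mvc ND (mvc ND (mvc ND (mvc ND (mvc ND (mvc ND (mvc ND (mvc ND (mvc ND (mvc NR (mvc NR (mvc NR (mvc ND (mvc ND (mvc ND (mvc NU (mvc NU (mvc NU (mvc NR (mvc NR (mvc NR (mvc NB (mvc NB (mvc NB (mvc NB (mvc NF (mvc ND (mvc NF (mvc NL (mvc NF (mvc NF (mvc NU (mvc NU (mvc NU (mvc NR (mvc NR (mvc NR (mvc NU (mvc NU (mvc NU (mvc NR (mvc NR (mvc NF (mvc NR (mvc NR (mvc NR (mvc NU (mvc NU (mvc NU (mvc NR (mvc NR (mvc NR (mvc NU (mvc NR (mvc NF (mvc NF (mvc NF (mvc NR (mvc NR (mvc NR (mvc NU (mvc NR (mvc NF (mvc NF (mvc NF (mvc NF (mvc NF (mvc NF (mvc NL (mvc NL (mvc NL (mvc NF (mvc NF (mvc NF (mvc ND (mvc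 ND (mvc ND (mvc NF (mvc NF (mvc NF (mvc NB (mvc NB (mvc NB (c)))))))))))))))))))))))))))))))))))))))))))))))))))))))))))))))))))))))))))))))))))))))))))))))))))))))))))))))))))))))))))))))))))))))"

definition Wq3 :: "c48 \<Rightarrow> c48" where "Wq3 c = mvc NL (mvc NB (mvc NF (mvc NF (mvc NL (mvc NF (mvc NF (mvc NU (mvc NU (mvc NU (mvc NR (mvc NR (mvc NR (mvc NU (mvc NU (mvc NU (mvc NR (mvc NR (mvc NF (mvc NR (mvc NR (mvc NR (mvc NU (mvc NU (mvc NU (mvc NR (mvc NR (mvc NR (mvc NU (mvc NR (mvc NF (mvc NF (mvc NF (mvc NR (mvc NR (mvc NR (mvc NU (mvc NR (mvc NF (mvc NF (mvc NF (mvc NF (mvc NF (mvc NF (mvc NL (mvc NL (mvc NL (mvc NF (mvc NF (mvc NF (mvc NF (mvc NF (mvc NF (mvc NB (mvc NB (mvc NB (mvc NL (mvc NL (mvc NL (c)))))))))))))))))))))))))))))))))))))))))))))))))))))))))))"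

definition Wq4 :: "c48 \<Rightarrow> c48" where "Wq4 c = mvc ND (mvc NU (mvc NL (mvc ND (mvc NR (mvc ND (mvc ND (mvc ND (mvc NR (mvc NR (mvc NR (mvc ND (mvc NR (mvc ND (mvc ND (mvc ND (mvc NR (mvc NR (mvc NR (mvc NU (mvc NR (mvc NR (mvc NR (mvc NR (mvc NR (mvc NR (mvc NR (mvc NR (mvc NR (mvc ND (mvc ND (mvc ND (mvc ND (mvc ND (mvc ND (mvc ND (mvc ND (mvc ND (mvc NR (mvc NR (mvc NR (mvc ND (mvc ND (mvc ND (mvc NR (mvc NR (mvc NR (mvc NR (mvc NR (mvc NR (mvc NR (mvc NR (mvc NR (mvc ND (mvc ND (mvc ND (mvc ND (mvc ND (mvc ND (mvc ND (mvc ND (mvc ND (mvc NR (mvc NR (mvc NR (mvc ND (mvc ND (mvc ND (mvc NU (mvc NU (mvc NU (mvc NL (mvc NL (mvc NL (mvc NU (mvc NU (mvc NU (mvc ND (mvc ND (mvc ND (mvc NF (mvc ND (mvc NF (mvc NL (mvc NB (mvc NF (mvc NF (mvc NU (mvc NU (mvc NU (mvc NR (mvc NR (mvc NR (mvc NU (mvc NU (mvc NU (mvc NR (mvc NR (mvc NF (mvc NR (mvc NR (mvc NR (mvc NU (mvc NU (mvc NU (mvc NR (mvc NR (mvc NR (mvc NU (mvc NR (mvc NF (mvc NF (mvc NF (mvc NR (mvc NR (mvc NR (mvc NU (mvc NR (mvc NF (mvc NF (mvc NF (mvc NF (mvc NF (mvc NF (mvc NB (mvc NB (mvc NB (mvc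 NL (mvc NL (mvc NL (mvc NF (mvc NF (mvc NF (mvc ND (mvc ND (mvc ND (mvc NF (mvc NF (mvc NF (c)))))))))))))))))))))))))))))))))))))))))))))))))))))))))))))))))))))))))))))))))))))))))))))))))))))))))))))))))))))))))))))))))))))))))))"

definition Wq5 :: "c48 \<Rightarrow> c48" where "Wq5 c = mvc NF (mvc ND (mvc NF (mvc NL (mvc NF (mvc NF (mvc NU (mvc NU (mvc NU (mvc NR (mvc NR (mvc NR (mvc NU (mvc NU (mvc NU (mvc NR (mvc NR (mvc NF (mvc NR (mvc NR (mvc NR (mvc NU (mvc NU (mvc NU (mvc NR (mvc NR (mvc NR (mvc NU (mvc NR (mvc NF (mvc NF (mvc NF (mvc NR (mvc NR (mvc NR (mvc NU (mvc NR (mvc NF (mvc NF (mvc NF (mvc NF (mvc NF (mvc NF (mvc NL (mvc NL (mvc NL (mvc NF (mvc NF (mvc NF (mvc ND (mvc ND (mvc ND (mvc NF (mvc NF (mvc NF (c)))))))))))))))))))))))))))))))))))))))))))))))))))))))"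

definition Wq6 :: "c48 \<Rightarrow> c48" where "Wq6 c = mvc ND (mvc NR (mvc ND (mvc ND (mvc ND (mvc NR (mvc NR (mvc NR (mvc ND (mvc NR (mvc ND (mvc ND (mvc ND (mvc NR (mvc NR (mvc NR (mvc NU (mvc NR (mvc NR (mvc NR (mvc NR (mvc NR (mvc NR (mvc NR (mvc NR (mvc NR (mvc ND (mvc ND (mvc ND (mvc ND (mvc ND (mvc ND (mvc ND (mvc ND (mvc ND (mvc NR (mvc NR (mvc NR (mvc ND (mvc ND (mvc ND (mvc NR (mvc NR (mvc NR (mvc NR (mvc NR (mvc NR (mvc NR (mvc NR (mvc NR (mvc ND (mvc ND (mvc ND (mvc ND (mvc ND (mvc ND (mvc ND (mvc ND (mvc ND (mvc NR (mvc NR (mvc NR (mvc ND (mvc ND (mvc ND (mvc NU (mvc NU (mvc NU (mvc NL (mvc NB (mvc NU (mvc NU (mvc NU (mvc NR (mvc NR (mvc NR (mvc NU (mvc NU (mvc NU (mvc NR (mvc NR (mvc NF (mvc NR (mvc NR (mvc NR (mvc NU (mvc NU (mvc NU (mvc NR (mvc NR (mvc NR (mvc NU (mvc NR (mvc NF (mvc NF (mvc NF (mvc NR (mvc NR (mvc NR (mvc NU (mvc NR (mvc NB (mvc NB (mvc NB (mvc NL (mvc NL (mvc NL (c)))))))))))))))))))))))))))))))))))))))))))))))))))))))))))))))))))))))))))))))))))))))))))))))))))))))))))"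

definition WlU :: "c48 \<Rightarrow> c48" where "WlU c = c"

definition WlD :: "c48 \<Rightarrow> c48" where "WlD c = c"

definition WlF :: "c48 \<Rightarrow> c48" where "WlF c = mvc NF (mvc ND (mvc NR (mvc ND (mvc ND (mvc ND (mvc NR (mvc NR (mvc NR (mvc ND (mvc NR (mvc ND (mvc ND (mvc ND (mvc NR (mvc NR (mvc NR (mvc NU (mvc NR (mvc NR (mvc NR (mvc NR (mvc NR (mvc NR (mvc NR (mvc NR (mvc NR (mvc ND (mvc ND (mvc ND (mvc ND (mvc ND (mvc ND (mvc ND (mvc ND (mvc ND (mvc NR (mvc NR (mvc NR (mvc ND (mvc ND (mvc ND (mvc NR (mvc NR (mvc NR (mvc NR (mvc NR (mvc NR (mvc NR (mvc NR (mvc NR (mvc ND (mvc ND (mvc ND (mvc ND (mvc ND (mvc ND (mvc ND (mvc ND (mvc ND (mvc NR (mvc NR (mvc NR (mvc ND (mvc ND (mvc ND (mvc NU (mvc NU (mvc NU (mvc NF (mvc NF (mvc NF (mvc NU (mvc NL (mvc ND (mvc NR (mvc ND (mvc ND (mvc ND (mvc NR (mvc NR (mvc NR (mvc ND (mvc NR (mvc ND (mvc ND (mvc ND (mvc NR (mvc NR (mvc NR (mvc NU (mvc NR (mvc NR (mvc NR (mvc NR (mvc NR (mvc NR (mvc NR (mvc NR (mvc NR (mvc ND (mvc ND (mvc ND (mvc ND (mvc ND (mvc ND (mvc ND (mvc ND (mvc ND (mvc NR (mvc NR (mvc NR (mvc ND (mvc ND (mvc ND (mvc NR (mvc NR (mvc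 NR (mvc NR (mvc NR (mvc NR (mvc NR (mvc NR (mvc NR (mvc ND (mvc ND (mvc ND (mvc ND (mvc ND (mvc ND (mvc ND (mvc ND (mvc ND (mvc NR (mvc NR (mvc NR (mvc ND (mvc ND (mvc ND (mvc NU (mvc NU (mvc NU (mvc NL (mvc NL (mvc NL (mvc NU (mvc NU (mvc NU (c))))))))))))))))))))))))))))))))))))))))))))))))))))))))))))))))))))))))))))))))))))))))))))))))))))))))))))))))))))))))))))))))))))))))))))))))))))"

definition WlB :: "c48 \<Rightarrow> c48" where "WlB c = mvc NB (mvc NU (mvc NU (mvc ND (mvc NR (mvc ND (mvc ND (mvc ND (mvc NR (mvc NR (mvc NR (mvc ND (mvc NR (mvc ND (mvc ND (mvc ND (mvc NR (mvc NR (mvc NR (mvc NU (mvc NR (mvc NR (mvc NR (mvc NR (mvc NR (mvc NR (mvc NR (mvc NR (mvc NR (mvc ND (mvc ND (mvc ND (mvc ND (mvc ND (mvc ND (mvc ND (mvc ND (mvc ND (mvc NR (mvc NR (mvc NR (mvc ND (mvc ND (mvc ND (mvc NR (mvc NR (mvc NR (mvc NR (mvc NR (mvc NR (mvc NR (mvc NR (mvc NR (mvc ND (mvc ND (mvc ND (mvc ND (mvc ND (mvc ND (mvc ND (mvc ND (mvc ND (mvc NR (mvc NR (mvc NR (mvc ND (mvc ND (mvc ND (mvc NU (mvc NU (mvc NU (mvc NU (mvc NU (mvc NU (mvc NU (mvc NU (mvc NU (mvc NB (mvc NB (mvc NB (mvc NR (mvc NR (mvc NF (mvc ND (mvc NR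 (mvc ND (mvc ND (mvc ND (mvc NR (mvc NR (mvc NR (mvc ND (mvc NR (mvc ND (mvc ND (mvc ND (mvc NR (mvc NR (mvc NR (mvc NU (mvc NR (mvc NR (mvc NR (mvc NR (mvc NR (mvc NR (mvc NR (mvc NR (mvc NR (mvc ND (mvc ND (mvc ND (mvc ND (mvc ND (mvc ND (mvc ND (mvc ND (mvc ND (mvc NR (mvc NR (mvc NR (mvc ND (mvc ND (mvc ND (mvc NR (mvc NR (mvc NR (mvc NR (mvc NR (mvc NR (mvc NR (mvc NR (mvc NR (mvc ND (mvc ND (mvc ND (mvc ND (mvc ND (mvc ND (mvc ND (mvc ND (mvc ND (mvc NR (mvc NR (mvc NR (mvc ND (mvc ND (mvc ND (mvc NU (mvc NU (mvc NU (mvc NF (mvc NF (mvc NF (mvc NR (mvc NR (mvc NR (mvc NR (mvc NR (mvc NR (c))))))))))))))))))))))))))))))))))))))))))))))))))))))))))))))))))))))))))))))))))))))))))))))))))))))))))))))))))))))))))))))))))))))))))))))))))))))))))))))))"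

definition WlL :: "c48 \<Rightarrow> c48" where "WlL c = mvc NL (mvc NU (mvc ND (mvc NR (mvc ND (mvc ND (mvc ND (mvc NR (mvc NR (mvc NR (mvc ND (mvc NR (mvc ND (mvc ND (mvc ND (mvc NR (mvc NR (mvc NR (mvc NU (mvc NR (mvc NR (mvc NR (mvc NR (mvc NR (mvc NR (mvc NR (mvc NR (mvc NR (mvc ND (mvc ND (mvc ND (mvc ND (mvc ND (mvc ND (mvc ND (mvc ND (mvc ND (mvc NR (mvc NR (mvc NR (mvc ND (mvc ND (mvc ND (mvc NR (mvc NR (mvc NR (mvc NR (mvc NR (mvc NR (mvc NR (mvc NR (mvc NR (mvc ND (mvc ND (mvc ND (mvc ND (mvc ND (mvc ND (mvc ND (mvc ND (mvc ND (mvc NR (mvc NR (mvc NR (mvc ND (mvc ND (mvc ND (mvc NU (mvc NU (mvc NU (mvc NU (mvc NU (mvc NU (mvc NL (mvc NL (mvc NL (mvc NU (mvc NB (mvc NU (mvc ND (mvc NR (mvc ND (mvc ND (mvc ND (mvc NR (mvc NR (mvc NR (mvc ND (mvc NR (mvc ND (mvc ND (mvc ND (mvc NR (mvc NR (mvc NR (mvc NU (mvc NR (mvc NR (mvc NR (mvc NR (mvc NR (mvc NR (mvc NR (mvc NR (mvc NR (mvc ND (mvc ND (mvc ND (mvc ND (mvc ND (mvc ND (mvc ND (mvc ND (mvc ND (mvc NR (mvc NR (mvc NR (mvc ND (mvc ND (mvc ND (mvc NR (mvc NR (mvc NR (mvc NR (mvc NR (mvc NR (mvc NR (mvc NR (mvc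 NR (mvc ND (mvc ND (mvc ND (mvc ND (mvc ND (mvc ND (mvc ND (mvc ND (mvc ND (mvc NR (mvc NR (mvc NR (mvc ND (mvc ND (mvc ND (mvc NU (mvc NU (mvc NU (mvc NU (mvc NU (mvc NU (mvc NB (mvc NB (mvc NB (mvc NU (mvc NU (mvc NU (c))))))))))))))))))))))))))))))))))))))))))))))))))))))))))))))))))))))))))))))))))))))))))))))))))))))))))))))))))))))))))))))))))))))))))))))))))))))))))))"

definition WlR :: "c48 \<Rightarrow> c48" where "WlR c = mvc NR (mvc NF (mvc ND (mvc NR (mvc ND (mvc ND (mvc ND (mvc NR (mvc NR (mvc NR (mvc ND (mvc NR (mvc ND (mvc ND (mvc ND (mvc NR (mvc NR (mvc NR (mvc NU (mvc NR (mvc NR (mvc NR (mvc NR (mvc NR (mvc NR (mvc NR (mvc NR (mvc NR (mvc ND (mvc ND (mvc ND (mvc ND (mvc ND (mvc ND (mvc ND (mvc ND (mvc ND (mvc NR (mvc NR (mvc NR (mvc ND (mvc ND (mvc ND (mvc NR (mvc NR (mvc NR (mvc NR (mvc NR (mvc NR (mvc NR (mvc NR (mvc NR (mvc ND (mvc ND (mvc ND (mvc ND (mvc ND (mvc ND (mvc ND (mvc ND (mvc ND (mvc NR (mvc NR (mvc NR (mvc ND (mvc ND (mvc ND (mvc NU (mvc NU (mvc NU (mvc NF (mvc NF (mvc NF (mvc NR (mvc NR (mvc NR (mvc NF (mvc ND (mvc NF (mvc ND (mvc NR (mvc ND (mvc ND (mvc ND (mvc NR (mvc NR (mvc NR (mvc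 ND (mvc NR (mvc ND (mvc ND (mvc ND (mvc NR (mvc NR (mvc NR (mvc NU (mvc NR (mvc NR (mvc NR (mvc NR (mvc NR (mvc NR (mvc NR (mvc NR (mvc NR (mvc ND (mvc ND (mvc ND (mvc ND (mvc ND (mvc ND (mvc ND (mvc ND (mvc ND (mvc NR (mvc NR (mvc NR (mvc ND (mvc ND (mvc ND (mvc NR (mvc NR (mvc NR (mvc NR (mvc NR (mvc NR (mvc NR (mvc NR (mvc NR (mvc ND (mvc ND (mvc ND (mvc ND (mvc ND (mvc ND (mvc ND (mvc ND (mvc ND (mvc NR (mvc NR (mvc NR (mvc ND (mvc ND (mvc ND (mvc NU (mvc NU (mvc NU (mvc NF (mvc NF (mvc NF (mvc ND (mvc ND (mvc ND (mvc NF (mvc NF (mvc NF (c))))))))))))))))))))))))))))))))))))))))))))))))))))))))))))))))))))))))))))))))))))))))))))))))))))))))))))))))))))))))))))))))))))))))))))))))))))))))))))"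

lemma G_cover: "list_all (\<lambda>p. list_all (\<lambda>n. ((nonzeros p = 3 \<or> nonzeros p = 2) \<and> dotv p n = 1) \<longrightarrow> List.member (map cst allc) (p,n)) ax_list) cl2"
  by code_simp

lemma G_fm: "list_all (\<lambda>m. list_all (\<lambda>c. fmx (axm m) (cst c) = cst (mvc m c)) allc) allm"
  by code_simp

lemma G_nxt: "list_all (\<lambda>c. nxt (cst c) = cst (nxtc c)) allc"
  by code_simp

lemma G_mv: "list_all (\<lambda>m. list_all (\<lambda>c. mvc m (nxtc c) = nxtc (mvc m c) \<and> iscorner (mvc m c) = iscorner c \<and> mvc m (mvc m (mvc m (mvc m c))) = c) allc) allm"
  by code_simp

lemma G_n6: "list_all (\<lambda>c. nxtc (nxtc (nxtc (nxtc (nxtc (nxtc c))))) = c \<and> (mark (cst c) \<or> mark (cst (nxtc c)) \<or> mark (cst (nxtc (nxtc c)))) \<and> (mark (cst c) \<longrightarrow> cst c = markof (fst (cst c)))) allc"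
  by code_simp

lemma G_pos: "list_all (\<lambda>p. (nonzeros p = 3 \<or> nonzeros p = 2) \<longrightarrow> list_ex (\<lambda>c. fst (cst c) = p) allc) cl2"
  by code_simp

lemma G_inj: "list_all (\<lambda>a. list_all (\<lambda>b. cst a = cst b \<longrightarrow> a = b) allc) allc"
  by code_simp

lemma G_qc: "list_all (\<lambda>(w,p). p \<noteq> c1v \<and> list_ex (\<lambda>c. iscorner c \<and> fst (cst c) = p) allc) qpairs \<and>
  list_ex (\<lambda>c. iscorner c \<and> fst (cst c) = c1v) allc \<and>
  list_ex (\<lambda>c. \<not> iscorner c \<and> fst (cst c) = edge_b) allc \<and>
  list_ex (\<lambda>c. \<not> iscorner c \<and> fst (cst c) = edge_c) allc \<and>
  list_all (\<lambda>c. iscorner c \<longrightarrow> fst (cst c) = c1v \<or> List.member (map snd qpairs) (fst (cst c))) allc"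
  by code_simp

lemma GQ0: "list_all (\<lambda>c. Wq0 (Wq0 c) = c \<and> mark (cst (Wq0 c)) = mark (cst c) \<and> (if iscorner c then fst (cst (Wq0 c)) = transpose c1v ((-1),(-1),(-1)) (fst (cst c)) else fst (cst (Wq0 c)) = transpose edge_b edge_c (fst (cst c)))) allc"
  apply (simp only: allc_def list.pred_inject)
  apply (simp add: Wq0_def mark_def iscorner_def c1v_def edge_b_def edge_c_def transpose_def)
  done

lemma GQ1: "list_all (\<lambda>c. Wq1 (Wq1 c) = c \<and> mark (cst (Wq1 c)) = mark (cst c) \<and> (if iscorner c then fst (cst (Wq1 c)) = transpose c1v ((-1),(-1),1) (fst (cst c)) else fst (cst (Wq1 c)) = transpose edge_b edge_c (fst (cst c)))) allc"
  apply (simp only: allc_def list.pred_inject)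
  apply (simp add: Wq1_def mark_def iscorner_def c1v_def edge_b_def edge_c_def transpose_def)
  done

lemma GQ2: "list_all (\<lambda>c. Wq2 (Wq2 c) = c \<and> mark (cst (Wq2 c)) = mark (cst c) \<and> (if iscorner c then fst (cst (Wq2 c)) = transpose c1v ((-1),1,(-1)) (fst (cst c)) else fst (cst (Wq2 c)) = transpose edge_b edge_c (fst (cst c)))) allc"
  apply (simp only: allc_def list.pred_inject)
  apply (simp add: Wq2_def mark_def iscorner_def c1v_def edge_b_def edge_c_def transpose_def)
  done

lemma GQ3: "list_all (\<lambda>c. Wq3 (Wq3 c) = c \<and> mark (cst (Wq3 c)) = mark (cst c) \<and> (if iscorner c then fst (cst (Wq3 c)) = transpose c1v (1,(-1),(-1)) (fst (cst c)) else fst (cst (Wq3 c)) = transpose edge_b edge_c (fst (cst c)))) allc"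
  apply (simp only: allc_def list.pred_inject)
  apply (simp add: Wq3_def mark_def iscorner_def c1v_def edge_b_def edge_c_def transpose_def)
  done

lemma GQ4: "list_all (\<lambda>c. Wq4 (Wq4 c) = c \<and> mark (cst (Wq4 c)) = mark (cst c) \<and> (if iscorner c then fst (cst (Wq4 c)) = transpose c1v (1,(-1),1) (fst (cst c)) else fst (cst (Wq4 c)) = transpose edge_b edge_c (fst (cst c)))) allc"
  apply (simp only: allc_def list.pred_inject)
  apply (simp add: Wq4_def mark_def iscorner_def c1v_def edge_b_def edge_c_def transpose_def)
  done

lemma GQ5: "list_all (\<lambda>c. Wq5 (Wq5 c) = c \<and> mark (cst (Wq5 c)) = mark (cst c) \<and> (if iscorner c then fst (cst (Wq5 c)) = transpose c1v (1,1,(-1)) (fst (cst c)) else fst (cst (Wq5 c)) = transpose edge_b edge_c (fst (cst c)))) allc"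
  apply (simp only: allc_def list.pred_inject)
  apply (simp add: Wq5_def mark_def iscorner_def c1v_def edge_b_def edge_c_def transpose_def)
  done

lemma GQ6: "list_all (\<lambda>c. Wq6 (Wq6 c) = c \<and> mark (cst (Wq6 c)) = mark (cst c) \<and> (if iscorner c then fst (cst (Wq6 c)) = transpose c1v (1,1,1) (fst (cst c)) else fst (cst (Wq6 c)) = transpose edge_b edge_c (fst (cst c)))) allc"
  apply (simp only: allc_def list.pred_inject)
  apply (simp add: Wq6_def mark_def iscorner_def c1v_def edge_b_def edge_c_def transpose_def)
  done

lemma GLU: "list_all (\<lambda>c. if iscorner c then fst (cst (WlU c)) = fst (cst c) \<and> WlU (Wq6 (Wq5 (Wq2 (c)))) = mvc NU c else WlU c = c) allc"
  apply (simp only: allc_def list.pred_inject)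
  apply (simp add: WlU_def Wq5_def Wq2_def Wq6_def mark_def iscorner_def c1v_def edge_b_def edge_c_def transpose_def)
  done

lemma GLD: "list_all (\<lambda>c. if iscorner c then fst (cst (WlD c)) = fst (cst c) \<and> WlD (Wq0 (Wq3 (Wq4 (Wq1 (Wq0 (c)))))) = mvc ND c else WlD c = c) allc"
  apply (simp only: allc_def list.pred_inject)
  apply (simp add: WlD_def Wq0_def Wq4_def Wq1_def Wq3_def mark_def iscorner_def c1v_def edge_b_def edge_c_def transpose_def)
  done

lemma GLF: "list_all (\<lambda>c. if iscorner c then fst (cst (WlF c)) = fst (cst c) \<and> WlF (Wq1 (Wq4 (Wq6 (c)))) = mvc NF c else WlF c = c) allc"
  apply (simp only: allc_def list.pred_inject)
  apply (simp add: WlF_def Wq6_def Wq4_def Wq1_def mark_def iscorner_def c1v_def edge_b_def edge_c_def transpose_def)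
  done

lemma GLB: "list_all (\<lambda>c. if iscorner c then fst (cst (WlB c)) = fst (cst c) \<and> WlB (Wq0 (Wq2 (Wq5 (Wq3 (Wq0 (c)))))) = mvc NB c else WlB c = c) allc"
  apply (simp only: allc_def list.pred_inject)
  apply (simp add: WlB_def Wq0_def Wq2_def Wq5_def Wq3_def mark_def iscorner_def c1v_def edge_b_def edge_c_def transpose_def)
  done

lemma GLL: "list_all (\<lambda>c. if iscorner c then fst (cst (WlL c)) = fst (cst c) \<and> WlL (Wq2 (Wq0 (Wq1 (c)))) = mvc NL c else WlL c = c) allc"
  apply (simp only: allc_def list.pred_inject)
  apply (simp add: WlL_def Wq0_def Wq2_def Wq1_def mark_def iscorner_def c1v_def edge_b_def edge_c_def transpose_def)
  done

lemma GLR: "list_all (\<lambda>c. if iscorner c then fst (cst (WlR c)) = fst (cst c) \<and> WlR (Wq3 (Wq5 (Wq6 (Wq4 (Wq3 (c)))))) = mvc NR c else WlR c = c) allc"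
  apply (simp only: allc_def list.pred_inject)
  apply (simp add: WlR_def Wq5_def Wq4_def Wq6_def Wq3_def mark_def iscorner_def c1v_def edge_b_def edge_c_def transpose_def)
  done

abbreviation "B3 \<equiv> BijGroup stickers3"
abbreviation "B2 \<equiv> BijGroup stickers2"

lemma allc: "c \<in> set allc"
  by (cases c) (simp_all add: allc_def)

lemma la_allc2: "list_all P allc \<Longrightarrow> P c"
  using allc[of c] by (simp add: list_all_iff)

lemma allm: "m \<in> set allm"
  by (cases m) (simp_all add: allm_def)

lemma la_allm: "list_all P allm \<Longrightarrow> P m"
  using allm[of m] by (simp add: list_all_iff)

lemma cst3: "cst c \<in> stickers3"
  by (cases c) (simp_all add: stickers3_def corner_pos_def edge_pos_def cube_pos_def axes_def)

lemma cl2_set: "set cl2 = {-1,0,1} \<times> {-1,0,1} \<times> {-1,0,1}"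
  unfolding cl2_def set_product by simp

lemma cube_pos_cl2: "cube_pos \<subseteq> set cl2"
  unfolding cl2_set cube_pos_def by (auto simp del: insert_iff)

lemma axes_list: "axes = set ax_list"
  unfolding axes_def ax_list_def by simp

lemma st3_cover: "s \<in> stickers3 \<Longrightarrow> \<exists>c. s = cst c"
proof -
  assume s: "s \<in> stickers3"
  obtain p n where pn: "s = (p,n)" by (cases s)
  have p: "p \<in> corner_pos \<union> edge_pos" and n: "n \<in> axes" and d: "dotv p n = 1"
    using s pn by (auto simp: stickers3_def)
  have "p \<in> cube_pos" "nonzeros p = 3 \<or> nonzeros p = 2"
    using p by (auto simp: corner_pos_def edge_pos_def)
  then have "p \<in> set cl2" using cube_pos_cl2 by auto
  moreover have "n \<in> set ax_list" using n axes_list by simp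
  ultimately have "List.member (map cst allc) (p,n)"
    using G_cover `nonzeros p = 3 \<or> nonzeros p = 2` d by (auto simp: list_all_iff)
  then show ?thesis using pn by auto
qed

lemma st3_range: "stickers3 = range cst"
  using st3_cover cst3 by (metis image_iff subsetI subset_antisym UNIV_I image_subsetI)

lemma fin3: "finite stickers3"
proof -
  have "stickers3 = cst ` set allc" using st3_range allc by auto
  then show ?thesis by (metis finite_set finite_imageI)
qed

lemma cst_inj: "cst a = cst b \<longleftrightarrow> a = b"
  using la_allc2[OF la_allc2[OF G_inj, of a], of b] by auto

lemma nonz_cases: "s \<in> stickers3 \<Longrightarrow> nonzeros (fst s) = 3 \<or> nonzeros (fst s) = 2"
  by (auto simp: stickers3_def corner_pos_def edge_pos_def)

lemma corner_iff: "s \<in> stickers3 \<Longrightarrow> fst s \<in> corner_pos \<longleftrightarrow> nonzeros (fst s) = 3"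
  by (auto simp: stickers3_def corner_pos_def edge_pos_def)

lemma edge_iff: "s \<in> stickers3 \<Longrightarrow> fst s \<in> edge_pos \<longleftrightarrow> nonzeros (fst s) = 2"
  by (auto simp: stickers3_def corner_pos_def edge_pos_def)

lemma st2_eq: "stickers2 = {s \<in> stickers3. nonzeros (fst s) = 3}"
  by (auto simp: stickers3_def stickers2_def corner_pos_def edge_pos_def)

lemma st2_sub: "stickers2 \<subseteq> stickers3"
  using st2_eq by auto

lemma fin2: "finite stickers2"
  using st2_sub fin3 finite_subset by blast

lemma iscorner_cst: "iscorner c \<longleftrightarrow> nonzeros (fst (cst c)) = 3"
  by (simp add: iscorner_def)

lemma pos_sticker: "p \<in> corner_pos \<union> edge_pos \<Longrightarrow> \<exists>c. fst (cst c) = p"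
proof -
  assume p: "p \<in> corner_pos \<union> edge_pos"
  have "p \<in> cube_pos" "nonzeros p = 3 \<or> nonzeros p = 2"
    using p by (auto simp: corner_pos_def edge_pos_def)
  then have "p \<in> set cl2" using cube_pos_cl2 by auto
  then show ?thesis using G_pos `nonzeros p = 3 \<or> nonzeros p = 2` by (auto simp: list_all_iff list_ex_iff)
qed

lemma fm_st: "s \<in> stickers3 \<Longrightarrow> face_move stickers3 d s = fmx d s"
  by (simp add: face_move_def fmx_def)

lemma fm_cst: "face_move stickers3 (axm m) (cst c) = cst (mvc m c)"
  using la_allc2[OF la_allm[OF G_fm, of m], of c] by (simp add: fm_st cst3)

lemma mv_facts: "mvc m (nxtc c) = nxtc (mvc m c) \<and> iscorner (mvc m c) = iscorner c \<and> mvc m (mvc m (mvc m (mvc m c))) = c"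
  using la_allc2[OF la_allm[OF G_mv, of m], of c] by simp

lemma nxt_cst: "nxt (cst c) = cst (nxtc c)"
  using la_allc2[OF G_nxt, of c] by simp

lemma n6_facts: "nxtc (nxtc (nxtc (nxtc (nxtc (nxtc c))))) = c \<and> (mark (cst c) \<or> mark (cst (nxtc c)) \<or> mark (cst (nxtc (nxtc c)))) \<and> (mark (cst c) \<longrightarrow> cst c = markof (fst (cst c)))"
  using la_allc2[OF G_n6, of c] by simp

lemma nxtc_inj: "nxtc a = nxtc b \<Longrightarrow> a = b"
  by (metis n6_facts)

lemma bij4:
  assumes "\<forall>s\<in>S. f s \<in> S" "\<forall>s\<in>S. f (f (f (f s))) = s"
  shows "bij_betw f S S"
  unfolding bij_betw_def
proof
  show "inj_on f S"
    by (smt (verit) assms(2) inj_onI)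
  show "f ` S = S"
  proof
    show "f ` S \<subseteq> S" using assms(1) by auto
    show "S \<subseteq> f ` S"
    proof
      fix y assume "y \<in> S"
      then have "y = f (f (f (f y)))" "f (f (f y)) \<in> S" using assms by auto
      then show "y \<in> f ` S" by blast
    qed
  qed
qed

lemma fm_Bij: "face_move stickers3 (axm m) \<in> Bij stickers3"
proof -
  have "\<forall>s\<in>stickers3. face_move stickers3 (axm m) s \<in> stickers3"
  proof
    fix s assume "s \<in> stickers3" then obtain c where "s = cst c" using st3_cover by blast
    then show "face_move stickers3 (axm m) s \<in> stickers3" by (simp add: fm_cst cst3)
  qed
  moreover have "\<forall>s\<in>stickers3. face_move stickers3 (axm m) (face_move stickers3 (axm m) (face_move stickers3 (axm m) (face_move stickers3 (axm m) s))) = s"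
  proof
    fix s assume "s \<in> stickers3" then obtain c where "s = cst c" using st3_cover by blast
    then show "face_move stickers3 (axm m) (face_move stickers3 (axm m) (face_move stickers3 (axm m) (face_move stickers3 (axm m) s))) = s" by (simp add: fm_cst mv_facts)
  qed
  ultimately show ?thesis
    unfolding Bij_def by (auto intro!: bij4 simp: face_move_def)
qed

lemma axes_range: "{U_ax, D_ax, F_ax, B_ax, L_ax, R_ax} = range axm"
proof
  show "range axm \<subseteq> {U_ax, D_ax, F_ax, B_ax, L_ax, R_ax}"
  proof
    fix x assume "x \<in> range axm" then obtain m where "x = axm m" by auto
    then show "x \<in> {U_ax, D_ax, F_ax, B_ax, L_ax, R_ax}" by (cases m) auto
  qed
  show "{U_ax, D_ax, F_ax, B_ax, L_ax, R_ax} \<subseteq> range axm"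
    by (auto intro: range_eqI[of _ axm NU] range_eqI[of _ axm ND] range_eqI[of _ axm NF]
        range_eqI[of _ axm NB] range_eqI[of _ axm NL] range_eqI[of _ axm NR])
qed

lemma moves3: "moves stickers3 = range (\<lambda>m. face_move stickers3 (axm m))"
  unfolding moves_def axes_range by auto

lemma grpB3: "group B3" by (rule group_BijGroup)
lemma grpB2: "group B2" by (rule group_BijGroup)

lemma moves_sub: "moves stickers3 \<subseteq> carrier B3"
  unfolding moves3 by (auto simp: BijGroup_def fm_Bij)

lemma carrier_G3: "carrier G3 = generate B3 (moves stickers3)"
  unfolding G3_def carrier_subgroup_generated using moves_sub by (simp add: Int_absorb1)

lemma mult_G3 [simp]: "monoid.mult G3 = monoid.mult B3"
  by (simp add: G3_def)
lemma one_G3 [simp]: "monoid.one G3 = monoid.one B3"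
  by (simp add: G3_def)
lemma grpG3: "group G3"
  unfolding G3_def by (rule group.group_subgroup_generated[OF grpB3])
lemma subG3: "subgroup (carrier G3) B3"
  unfolding carrier_G3 by (rule group.generate_is_subgroup[OF grpB3 moves_sub])
lemma G3_sub: "carrier G3 \<subseteq> Bij stickers3"
  using subgroup.subset[OF subG3] by (simp add: BijGroup_def)

lemma multB3: "x \<in> Bij stickers3 \<Longrightarrow> y \<in> Bij stickers3 \<Longrightarrow> x \<otimes>\<^bsub>B3\<^esub> y = (\<lambda>s\<in>stickers3. x (y s))"
  by (simp add: BijGroup_def compose_def)
lemma multB2: "x \<in> Bij stickers2 \<Longrightarrow> y \<in> Bij stickers2 \<Longrightarrow> x \<otimes>\<^bsub>B2\<^esub> y = (\<lambda>s\<in>stickers2. x (y s))"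
  by (simp add: BijGroup_def compose_def)
lemma oneB3: "\<one>\<^bsub>B3\<^esub> = (\<lambda>s\<in>stickers3. s)"
  by (simp add: BijGroup_def)
lemma oneB2: "\<one>\<^bsub>B2\<^esub> = (\<lambda>s\<in>stickers2. s)"
  by (simp add: BijGroup_def)

lemma Bij_in: "x \<in> Bij S \<Longrightarrow> s \<in> S \<Longrightarrow> x s \<in> S"
  by (auto simp: Bij_def bij_betw_def)
lemma Bij_out: "x \<in> Bij S \<Longrightarrow> s \<notin> S \<Longrightarrow> x s = undefined"
  by (auto simp: Bij_def extensional_def)

lemma G3_Bij: "x \<in> carrier G3 \<Longrightarrow> x \<in> Bij stickers3"
  using G3_sub by (rule subsetD)

lemma G3_in: "x \<in> carrier G3 \<Longrightarrow> s \<in> stickers3 \<Longrightarrow> x s \<in> stickers3"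
  by (rule Bij_in[OF G3_Bij])

lemma G3_mult_app: "x \<in> carrier G3 \<Longrightarrow> y \<in> carrier G3 \<Longrightarrow> s \<in> stickers3 \<Longrightarrow> (x \<otimes>\<^bsub>B3\<^esub> y) s = x (y s)"
  by (simp add: multB3 G3_Bij)

lemma G3_ext:
  assumes "x \<in> carrier G3" "y \<in> carrier G3" "\<And>s. s \<in> stickers3 \<Longrightarrow> x s = y s"
  shows "x = y"
proof (rule ext)
  fix s
  show "x s = y s"
  proof (cases "s \<in> stickers3")
    case True then show ?thesis using assms(3) by blast
  next
    case False then show ?thesis using Bij_out[OF G3_Bij[OF assms(1)]] Bij_out[OF G3_Bij[OF assms(2)]] by simp
  qed
qed

lemma fm_G3: "face_move stickers3 (axm m) \<in> carrier G3"
  unfolding carrier_G3 moves3 by (rule generate.incl) auto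

lemma G3_m: "x \<in> carrier G3 \<Longrightarrow> y \<in> carrier G3 \<Longrightarrow> x \<otimes>\<^bsub>B3\<^esub> y \<in> carrier G3"
  using subgroup.m_closed[OF subG3] by blast

lemma G3_one: "\<one>\<^bsub>B3\<^esub> \<in> carrier G3"
  using subgroup.one_closed[OF subG3] by blast

lemma G3_inv: "x \<in> carrier G3 \<Longrightarrow> inv\<^bsub>B3\<^esub> x \<in> carrier G3"
  using subgroup.m_inv_closed[OF subG3] by blast

lemma inv_G3: "x \<in> carrier G3 \<Longrightarrow> inv\<^bsub>G3\<^esub> x = inv\<^bsub>B3\<^esub> x"
  unfolding G3_def by (rule group.inv_subgroup_generated[OF grpB3]) (simp add: G3_def[symmetric])

lemma fm_inv: "inv\<^bsub>B3\<^esub> (face_move stickers3 (axm m)) = face_move stickers3 (axm m) \<otimes>\<^bsub>B3\<^esub> (face_move stickers3 (axm m) \<otimes>\<^bsub>B3\<^esub> face_move stickers3 (axm m))"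
proof (rule group.inv_equality[OF grpB3])
  let ?f = "face_move stickers3 (axm m)"
  have G: "?f \<in> carrier G3" by (rule fm_G3)
  have FF: "?f \<otimes>\<^bsub>B3\<^esub> ?f \<in> carrier G3" using G G3_m by blast
  have GG: "?f \<otimes>\<^bsub>B3\<^esub> (?f \<otimes>\<^bsub>B3\<^esub> ?f) \<in> carrier G3" using G FF G3_m by blast
  show "?f \<otimes>\<^bsub>B3\<^esub> (?f \<otimes>\<^bsub>B3\<^esub> ?f) \<otimes>\<^bsub>B3\<^esub> ?f = \<one>\<^bsub>B3\<^esub>"
  proof (rule G3_ext)
    show "?f \<otimes>\<^bsub>B3\<^esub> (?f \<otimes>\<^bsub>B3\<^esub> ?f) \<otimes>\<^bsub>B3\<^esub> ?f \<in> carrier G3" using G GG G3_m by blast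
    show "\<one>\<^bsub>B3\<^esub> \<in> carrier G3" by (rule G3_one)
    fix s assume s: "s \<in> stickers3"
    then obtain c where c: "s = cst c" using st3_cover by blast
    show "(?f \<otimes>\<^bsub>B3\<^esub> (?f \<otimes>\<^bsub>B3\<^esub> ?f) \<otimes>\<^bsub>B3\<^esub> ?f) s = \<one>\<^bsub>B3\<^esub> s"
      using s G GG FF by (simp add: G3_mult_app G3_in[OF G] G3_in[OF FF] oneB3 c fm_cst mv_facts cst3)
  qed
  show "?f \<in> carrier B3" using moves_sub moves3 by auto
  show "?f \<otimes>\<^bsub>B3\<^esub> (?f \<otimes>\<^bsub>B3\<^esub> ?f) \<in> carrier B3" using fm_G3 G3_m subgroup.subset[OF subG3] by blast
qed

lemma G3_induct [consumes 1, case_names one move mult]: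
  assumes g: "g \<in> carrier G3"
    and one: "P \<one>\<^bsub>B3\<^esub>"
    and move: "\<And>m. P (face_move stickers3 (axm m))"
    and mult: "\<And>x y. x \<in> carrier G3 \<Longrightarrow> y \<in> carrier G3 \<Longrightarrow> P x \<Longrightarrow> P y \<Longrightarrow> P (x \<otimes>\<^bsub>B3\<^esub> y)"
  shows "P g"
proof -
  have "g \<in> carrier G3 \<and> P g"
    using g[unfolded carrier_G3]
  proof (induction rule: generate.induct)
    case one then show ?case using G3_one assms(2) by simp
  next
    case (incl h)
    then obtain m where "h = face_move stickers3 (axm m)" unfolding moves3 by auto
    then show ?case using fm_G3 move by simp
  next
    case (inv h)
    then obtain m where h: "h = face_move stickers3 (axm m)" unfolding moves3 by auto
    have "P (face_move stickers3 (axm m) \<otimes>\<^bsub>B3\<^esub> (face_move stickers3 (axm m) \<otimes>\<^bsub>B3\<^esub> face_move stickers3 (axm m)))"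
      using mult[OF fm_G3 G3_m[OF fm_G3 fm_G3]] mult[OF fm_G3 fm_G3] move by blast
    then show ?case unfolding h fm_inv using G3_m fm_G3 by blast
  next
    case (eng h1 h2)
    then show ?case using mult G3_m by blast
  qed
  then show ?thesis by simp
qed


primrec wfun :: "mv list \<Rightarrow> sticker \<Rightarrow> sticker" where
  "wfun [] = \<one>\<^bsub>B3\<^esub>"
| "wfun (m#w) = face_move stickers3 (axm m) \<otimes>\<^bsub>B3\<^esub> wfun w"

lemma wfun_G3: "wfun w \<in> carrier G3"
  by (induction w) (simp_all add: G3_one G3_m fm_G3)

lemma wfun_cst: "wfun w (cst c) = cst (app_word w c)"
proof (induction w)
  case Nil then show ?case by (simp add: oneB3 cst3)
next
  case (Cons m w) then show ?case
    by (simp add: G3_mult_app fm_G3 wfun_G3 cst3 fm_cst)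
qed

lemma app_word_append: "app_word (u @ v) c = app_word u (app_word v c)"
  by (induction u) auto

lemma wfun_append: "wfun (u @ v) = wfun u \<otimes>\<^bsub>B3\<^esub> wfun v"
proof (rule G3_ext)
  show "wfun (u @ v) \<in> carrier G3" "wfun u \<otimes>\<^bsub>B3\<^esub> wfun v \<in> carrier G3"
    using wfun_G3 G3_m by auto
  fix s assume "s \<in> stickers3"
  then obtain c where "s = cst c" using st3_cover by blast
  then show "wfun (u @ v) s = (wfun u \<otimes>\<^bsub>B3\<^esub> wfun v) s"
    by (simp add: G3_mult_app wfun_G3 cst3 wfun_cst app_word_append)
qed

definition Inv :: "(sticker \<Rightarrow> sticker) \<Rightarrow> bool" where
  "Inv g \<longleftrightarrow> (\<forall>s\<in>stickers3. g s \<in> stickers3 \<and> g (nxt s) = nxt (g s) \<and> nonzeros (fst (g s)) = nonzeros (fst s))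
     \<and> (\<forall>s\<in>stickers3. \<forall>t\<in>stickers3. fst s = fst t \<longrightarrow> fst (g s) = fst (g t))"

lemma nxt_st3: "s \<in> stickers3 \<Longrightarrow> nxt s \<in> stickers3"
  using st3_cover nxt_cst cst3 by metis

lemma nonz_mv: "nonzeros (fst (cst (mvc m c))) = nonzeros (fst (cst c))"
  using mv_facts[of m c] nonz_cases[OF cst3, of c] nonz_cases[OF cst3, of "mvc m c"]
  by (auto simp: iscorner_def)

lemma Inv_G3: "g \<in> carrier G3 \<Longrightarrow> Inv g"
proof (induction rule: G3_induct)
  case one then show ?case by (simp add: Inv_def oneB3 nxt_st3)
next
  case (move m)
  let ?f = "face_move stickers3 (axm m)"
  have A: "\<forall>s\<in>stickers3. ?f s \<in> stickers3 \<and> ?f (nxt s) = nxt (?f s) \<and> nonzeros (fst (?f s)) = nonzeros (fst s)"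
  proof
    fix s assume "s \<in> stickers3"
    then obtain c where "s = cst c" using st3_cover by blast
    then show "?f s \<in> stickers3 \<and> ?f (nxt s) = nxt (?f s) \<and> nonzeros (fst (?f s)) = nonzeros (fst s)"
      by (simp add: fm_cst cst3 nxt_cst mv_facts nonz_mv)
  qed
  have B: "\<forall>s\<in>stickers3. \<forall>t\<in>stickers3. fst s = fst t \<longrightarrow> fst (?f s) = fst (?f t)"
    by (simp add: fm_st fmx_def)
  show ?case using A B unfolding Inv_def by blast
next
  case (mult x y)
  show ?case unfolding Inv_def
  proof (intro conjI ballI impI)
    fix s assume s: "s \<in> stickers3"
    have ys: "y s \<in> stickers3" using G3_in[OF mult(2) s] .
    have I: "Inv x" "Inv y" by fact+
    then have Ix: "x (y s) \<in> stickers3 \<and> x (nxt (y s)) = nxt (x (y s)) \<and> nonzeros (fst (x (y s))) = nonzeros (fst (y s))"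
      and Iy: "y s \<in> stickers3 \<and> y (nxt s) = nxt (y s) \<and> nonzeros (fst (y s)) = nonzeros (fst s)"
      using s ys unfolding Inv_def by blast+
    show "(x \<otimes>\<^bsub>B3\<^esub> y) s \<in> stickers3" using Ix G3_mult_app[OF mult(1,2) s] by simp
    show "(x \<otimes>\<^bsub>B3\<^esub> y) (nxt s) = nxt ((x \<otimes>\<^bsub>B3\<^esub> y) s)"
      using Ix Iy G3_mult_app[OF mult(1,2) s] G3_mult_app[OF mult(1,2) nxt_st3[OF s]] by simp
    show "nonzeros (fst ((x \<otimes>\<^bsub>B3\<^esub> y) s)) = nonzeros (fst s)"
      using Ix Iy G3_mult_app[OF mult(1,2) s] by simp
  next
    fix s t assume s: "s \<in> stickers3" and t: "t \<in> stickers3" and st: "fst s = fst t"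
    have I: "Inv x" "Inv y" by fact+
    have ys: "y s \<in> stickers3" "y t \<in> stickers3" using G3_in[OF mult(2)] s t by auto
    have "fst (y s) = fst (y t)" using I(2) s t st unfolding Inv_def by blast
    then have "fst (x (y s)) = fst (x (y t))" using I(1) ys unfolding Inv_def by blast
    then show "fst ((x \<otimes>\<^bsub>B3\<^esub> y) s) = fst ((x \<otimes>\<^bsub>B3\<^esub> y) t)"
      using G3_mult_app[OF mult(1,2) s] G3_mult_app[OF mult(1,2) t] by simp
  qed
qed

lemma Inv_in: "g \<in> carrier G3 \<Longrightarrow> s \<in> stickers3 \<Longrightarrow> g s \<in> stickers3"
  by (rule G3_in)
lemma Inv_nxt: "g \<in> carrier G3 \<Longrightarrow> s \<in> stickers3 \<Longrightarrow> g (nxt s) = nxt (g s)"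
  using Inv_G3[of g] unfolding Inv_def by blast
lemma Inv_nz: "g \<in> carrier G3 \<Longrightarrow> s \<in> stickers3 \<Longrightarrow> nonzeros (fst (g s)) = nonzeros (fst s)"
  using Inv_G3[of g] unfolding Inv_def by blast
lemma Inv_cub: "g \<in> carrier G3 \<Longrightarrow> s \<in> stickers3 \<Longrightarrow> t \<in> stickers3 \<Longrightarrow> fst s = fst t \<Longrightarrow> fst (g s) = fst (g t)"
  using Inv_G3[of g] unfolding Inv_def by blast

lemma Inv_corner: "g \<in> carrier G3 \<Longrightarrow> s \<in> stickers3 \<Longrightarrow> fst (g s) \<in> corner_pos \<longleftrightarrow> fst s \<in> corner_pos"
  using corner_iff Inv_nz Inv_in by metis
lemma Inv_edge: "g \<in> carrier G3 \<Longrightarrow> s \<in> stickers3 \<Longrightarrow> fst (g s) \<in> edge_pos \<longleftrightarrow> fst s \<in> edge_pos"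
  using edge_iff Inv_nz Inv_in by metis

lemma st3_of_pos: "p \<in> corner_pos \<union> edge_pos \<Longrightarrow> \<exists>s\<in>stickers3. fst s = p"
  using pos_sticker cst3 by blast

lemma some_ax: "p \<in> corner_pos \<union> edge_pos \<Longrightarrow> (p, SOME n. n \<in> axes \<and> dotv p n = 1) \<in> stickers3"
proof -
  assume p: "p \<in> corner_pos \<union> edge_pos"
  then obtain s where s: "s \<in> stickers3" "fst s = p" using st3_of_pos by blast
  then have "snd s \<in> axes \<and> dotv p (snd s) = 1" by (auto simp: stickers3_def)
  then have "(SOME n. n \<in> axes \<and> dotv p n = 1) \<in> axes \<and> dotv p (SOME n. n \<in> axes \<and> dotv p n = 1) = 1"
    by (rule someI)
  then show ?thesis using p by (simp add: stickers3_def)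
qed

lemma pp_at:
  assumes g: "g \<in> carrier G3" and s: "s \<in> stickers3" and P: "P = corner_pos \<or> P = edge_pos" and sP: "fst s \<in> P"
  shows "pos_perm P g (fst s) = fst (g s)"
proof -
  have p: "fst s \<in> corner_pos \<union> edge_pos" using P sP by auto
  show ?thesis
    using Inv_cub[OF g some_ax[OF p] s] sP by (simp add: pos_perm_def)
qed

lemma pp_out: "p \<notin> P \<Longrightarrow> pos_perm P g p = p"
  by (simp add: pos_perm_def)

lemma pp_mult:
  assumes x: "x \<in> carrier G3" and y: "y \<in> carrier G3" and P: "P = corner_pos \<or> P = edge_pos"
  shows "pos_perm P (x \<otimes>\<^bsub>B3\<^esub> y) = pos_perm P x \<circ> pos_perm P y"
proof
  fix p
  show "pos_perm P (x \<otimes>\<^bsub>B3\<^esub> y) p = (pos_perm P x \<circ> pos_perm P y) p"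
  proof (cases "p \<in> P")
    case True
    then obtain s where s: "s \<in> stickers3" "fst s = p" using st3_of_pos P by blast
    have xy: "x \<otimes>\<^bsub>B3\<^esub> y \<in> carrier G3" using x y G3_m by blast
    have ys: "y s \<in> stickers3" using y s G3_in by blast
    have ysP: "fst (y s) \<in> P" using P Inv_corner[OF y s(1)] Inv_edge[OF y s(1)] True s by auto
    show ?thesis
      using pp_at[OF xy s(1) P] pp_at[OF y s(1) P] pp_at[OF x ys P ysP] True s
      by (simp add: G3_mult_app[OF x y s(1)])
  next
    case False then show ?thesis by (simp add: pp_out)
  qed
qed

lemma pp_one: "P = corner_pos \<or> P = edge_pos \<Longrightarrow> pos_perm P \<one>\<^bsub>B3\<^esub> = id"
proof
  fix p assume P: "P = corner_pos \<or> P = edge_pos"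
  show "pos_perm P \<one>\<^bsub>B3\<^esub> p = id p"
  proof (cases "p \<in> P")
    case True
    then have "p \<in> corner_pos \<union> edge_pos" using P by blast
    then show ?thesis using some_ax[of p] True by (simp add: pos_perm_def oneB3)
  next
    case False then show ?thesis by (simp add: pos_perm_def)
  qed
qed

lemma pp_permutes:
  assumes g: "g \<in> carrier G3" and P: "P = corner_pos \<or> P = edge_pos"
  shows "pos_perm P g permutes P"
proof -
  let ?h = "inv\<^bsub>B3\<^esub> g"
  have h: "?h \<in> carrier G3" using G3_inv g by blast
  have gB: "g \<in> carrier B3" using g subgroup.subset[OF subG3] by blast
  have 1: "pos_perm P g \<circ> pos_perm P ?h = id"
    using pp_mult[OF g h P] group.r_inv[OF grpB3 gB] pp_one[OF P] by metis
  have 2: "pos_perm P ?h \<circ> pos_perm P g = id"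
    using pp_mult[OF h g P] group.l_inv[OF grpB3 gB] pp_one[OF P] by metis
  show ?thesis
    unfolding permutes_def
  proof (intro conjI allI impI)
    fix x assume "x \<notin> P" then show "pos_perm P g x = x" by (rule pp_out)
  next
    fix y
    show "\<exists>!x. pos_perm P g x = y"
    proof
      show "pos_perm P g (pos_perm P ?h y) = y" using 1 by (metis comp_apply id_apply)
    next
      fix x assume "pos_perm P g x = y"
      then show "x = pos_perm P ?h y" using 2 by (metis comp_apply id_apply)
    qed
  qed
qed

lemma phi_psi: "phi (psi g) = pos_perm corner_pos g"
proof
  fix p
  show "phi (psi g) p = pos_perm corner_pos g p"
  proof (cases "p \<in> corner_pos")
    case True
    then have "(p, SOME n. n \<in> axes \<and> dotv p n = 1) \<in> stickers2"
      using some_ax[of p] by (simp add: st2_eq corner_pos_def)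
    then show ?thesis using True by (simp add: phi_def pos_perm_def psi_def)
  next
    case False then show ?thesis by (simp add: phi_def pos_perm_def)
  qed
qed

lemma app_q0: "app_word qw0 c = Wq0 c"
  by (simp only: qw0_def Wq0_def app_word.simps)

lemma app_q1: "app_word qw1 c = Wq1 c"
  by (simp only: qw1_def Wq1_def app_word.simps)

lemma app_q2: "app_word qw2 c = Wq2 c"
  by (simp only: qw2_def Wq2_def app_word.simps)

lemma app_q3: "app_word qw3 c = Wq3 c"
  by (simp only: qw3_def Wq3_def app_word.simps)

lemma app_q4: "app_word qw4 c = Wq4 c"
  by (simp only: qw4_def Wq4_def app_word.simps)

lemma app_q5: "app_word qw5 c = Wq5 c"
  by (simp only: qw5_def Wq5_def app_word.simps)

lemma app_q6: "app_word qw6 c = Wq6 c"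
  by (simp only: qw6_def Wq6_def app_word.simps)

lemma app_lU: "app_word lwU c = WlU c"
  by (simp only: lwU_def WlU_def app_word.simps)

lemma app_lD: "app_word lwD c = WlD c"
  by (simp only: lwD_def WlD_def app_word.simps)

lemma app_lF: "app_word lwF c = WlF c"
  by (simp only: lwF_def WlF_def app_word.simps)

lemma app_lB: "app_word lwB c = WlB c"
  by (simp only: lwB_def WlB_def app_word.simps)

lemma app_lL: "app_word lwL c = WlL c"
  by (simp only: lwL_def WlL_def app_word.simps)

lemma app_lR: "app_word lwR c = WlR c"
  by (simp only: lwR_def WlR_def app_word.simps)

lemma gen_facts:
  assumes "(w,p) \<in> set qpairs"
  shows "app_word w (app_word w c) = c \<and> mark (cst (app_word w c)) = mark (cst c) \<and>
    (if iscorner c then fst (cst (app_word w c)) = transpose c1v p (fst (cst c))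
     else fst (cst (app_word w c)) = transpose edge_b edge_c (fst (cst c)))"
  using assms unfolding qpairs_def
  apply (simp only: set_simps insert_iff empty_iff prod.inject)
  apply (elim disjE conjE)
  apply (simp_all only: app_q0 app_q1 app_q2 app_q3 app_q4 app_q5 app_q6)
  using la_allc2[OF GQ0, of c] la_allc2[OF GQ1, of c] la_allc2[OF GQ2, of c] la_allc2[OF GQ3, of c]
    la_allc2[OF GQ4, of c] la_allc2[OF GQ5, of c] la_allc2[OF GQ6, of c]
  by simp_all

lemma corner_of: "iscorner c \<Longrightarrow> fst (cst c) \<in> corner_pos"
  using corner_iff[OF cst3, of c] unfolding iscorner_def by blast

lemma edge_of: "\<not> iscorner c \<Longrightarrow> fst (cst c) \<in> edge_pos"
  using edge_iff[OF cst3, of c] nonz_cases[OF cst3, of c] unfolding iscorner_def by blast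

lemma qc_corner: "(w,p) \<in> set qpairs \<Longrightarrow> p \<in> corner_pos \<and> p \<noteq> c1v"
proof -
  assume wp: "(w,p) \<in> set qpairs"
  have "list_all (\<lambda>(w,p). p \<noteq> c1v \<and> list_ex (\<lambda>c. iscorner c \<and> fst (cst c) = p) allc) qpairs"
    using G_qc by (rule conjunct1)
  then have "p \<noteq> c1v \<and> list_ex (\<lambda>c. iscorner c \<and> fst (cst c) = p) allc"
    using wp unfolding list_all_iff by fastforce
  then obtain c where "p \<noteq> c1v" "iscorner c" "fst (cst c) = p" unfolding list_ex_iff by blast
  then show ?thesis using corner_of by blast
qed

lemma c1_corner: "c1v \<in> corner_pos"
proof -
  have "list_ex (\<lambda>c. iscorner c \<and> fst (cst c) = c1v) allc" using G_qc by blast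
  then obtain c where c: "iscorner c" "fst (cst c) = c1v" unfolding list_ex_iff by blast
  have "fst (cst c) \<in> corner_pos" by (rule corner_of[OF c(1)])
  then show ?thesis unfolding c(2) .
qed

lemma eb_edge: "edge_b \<in> edge_pos"
proof -
  have "list_ex (\<lambda>c. \<not> iscorner c \<and> fst (cst c) = edge_b) allc" using G_qc by blast
  then obtain c where c: "\<not> iscorner c" "fst (cst c) = edge_b" unfolding list_ex_iff by blast
  have "fst (cst c) \<in> edge_pos" by (rule edge_of[OF c(1)])
  then show ?thesis unfolding c(2) .
qed

lemma ec_edge: "edge_c \<in> edge_pos"
proof -
  have "list_ex (\<lambda>c. \<not> iscorner c \<and> fst (cst c) = edge_c) allc" using G_qc by blast
  then obtain c where c: "\<not> iscorner c" "fst (cst c) = edge_c" unfolding list_ex_iff by blast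
  have "fst (cst c) \<in> edge_pos" by (rule edge_of[OF c(1)])
  then show ?thesis unfolding c(2) .
qed

lemma corner_cover: "p \<in> corner_pos \<Longrightarrow> p = c1v \<or> (\<exists>w. (w,p) \<in> set qpairs)"
proof -
  assume p: "p \<in> corner_pos"
  then obtain c where c: "fst (cst c) = p" using pos_sticker by blast
  have "iscorner c" using p c corner_iff[OF cst3, of c] unfolding iscorner_def by blast
  moreover have "list_all (\<lambda>c. iscorner c \<longrightarrow> fst (cst c) = c1v \<or> List.member (map snd qpairs) (fst (cst c))) allc"
    using G_qc by blast
  ultimately have "p = c1v \<or> p \<in> set (map snd qpairs)"
    using la_allc2[of "\<lambda>c. iscorner c \<longrightarrow> fst (cst c) = c1v \<or> List.member (map snd qpairs) (fst (cst c))" c] c by simp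
  then show ?thesis by force
qed

lemma fin_corner: "finite corner_pos"
proof -
  have "corner_pos \<subseteq> (\<lambda>c. fst (cst c)) ` set allc"
    using pos_sticker allc by blast
  then show ?thesis using finite_subset by blast
qed

lemma st2_maps: assumes g: "g \<in> carrier G3" and s: "s \<in> stickers2" shows "g s \<in> stickers2"
proof -
  have s3: "s \<in> stickers3" and n: "nonzeros (fst s) = 3" using s unfolding st2_eq by blast+
  have "g s \<in> stickers3" "nonzeros (fst (g s)) = 3" using G3_in[OF g s3] Inv_nz[OF g s3] n by auto
  then show ?thesis unfolding st2_eq by blast
qed

lemma psi_Bij: assumes g: "g \<in> carrier G3" shows "psi g \<in> Bij stickers2"
proof -
  have maps: "g ` stickers2 \<subseteq> stickers2"
    using st2_maps[OF g] by blast
  have "inj_on g stickers3" using G3_Bij[OF g] by (auto simp: Bij_def bij_betw_def)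
  then have inj: "inj_on g stickers2" using st2_sub inj_on_subset by blast
  have "g ` stickers2 = stickers2" by (rule endo_inj_surj[OF fin2 maps inj])
  then have "bij_betw g stickers2 stickers2" using inj by (simp add: bij_betw_def)
  then have "bij_betw (psi g) stickers2 stickers2"
    by (rule iffD1[OF bij_betw_cong, rotated]) (simp add: psi_def)
  then show ?thesis by (simp add: Bij_def psi_def)
qed

lemma psi_app: "s \<in> stickers2 \<Longrightarrow> psi g s = g s"
  by (simp add: psi_def)

lemma psi_mult: assumes x: "x \<in> carrier G3" and y: "y \<in> carrier G3"
  shows "psi (x \<otimes>\<^bsub>B3\<^esub> y) = psi x \<otimes>\<^bsub>B2\<^esub> psi y"
  unfolding multB2[OF psi_Bij[OF x] psi_Bij[OF y]]
proof (rule ext)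
  fix s
  show "psi (x \<otimes>\<^bsub>B3\<^esub> y) s = (\<lambda>s\<in>stickers2. psi x (psi y s)) s"
  proof (cases "s \<in> stickers2")
    case True
    have s3: "s \<in> stickers3" using True st2_sub by blast
    have "y s \<in> stickers2" using st2_maps[OF y True] .
    then show ?thesis using True by (simp add: psi_app G3_mult_app[OF x y s3])
  next
    case False then show ?thesis by (simp add: psi_def)
  qed
qed

lemma psi_one: "psi \<one>\<^bsub>B3\<^esub> = \<one>\<^bsub>B2\<^esub>"
  using st2_sub by (auto simp: psi_def oneB3 oneB2 intro!: ext)

lemma psi_hom: "psi \<in> hom G3 B2"
  unfolding hom_def using psi_Bij psi_mult by (auto simp: BijGroup_def[of stickers2])

lemma psi_group_hom: "group_hom G3 B2 psi"
  unfolding group_hom_def group_hom_axioms_def using grpG3 grpB2 psi_hom by simp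

lemma psi_fm: "psi (face_move stickers3 d) = face_move stickers2 d"
  using st2_sub by (auto simp: psi_def face_move_def intro!: ext)

lemma psi_moves: "psi ` moves stickers3 = moves stickers2"
  unfolding moves_def image_image psi_fm by simp

lemma moves_G3: "moves stickers3 \<subseteq> carrier G3"
  unfolding moves3 using fm_G3 by auto

lemma gen_G3: "generate G3 (moves stickers3) = carrier G3"
proof -
  have G: "G3 = B3\<lparr>carrier := carrier G3\<rparr>" by (simp add: G3_def subgroup_generated_def)
  have "generate (B3\<lparr>carrier := carrier G3\<rparr>) (moves stickers3) = generate B3 (moves stickers3)"
    by (rule group.generate_consistent[OF grpB3 moves_G3 subG3])
  then show ?thesis using G carrier_G3 by metis
qed

lemma carrier_G2: "carrier G2 = psi ` carrier G3"
proof -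
  have "generate B2 (psi ` moves stickers3) = psi ` generate G3 (moves stickers3)"
    by (rule group_hom.generate_img[OF psi_group_hom moves_G3])
  then have 1: "generate B2 (moves stickers2) = psi ` carrier G3"
    using psi_moves gen_G3 by simp
  have "moves stickers2 \<subseteq> carrier B2"
  proof
    fix x assume "x \<in> moves stickers2"
    then obtain y where "y \<in> moves stickers3" "x = psi y" using psi_moves by blast
    then show "x \<in> carrier B2" using psi_Bij moves_G3 by (auto simp: BijGroup_def)
  qed
  then show ?thesis using 1 unfolding G2_def carrier_subgroup_generated
    by (simp add: Int_absorb1)
qed

lemma mult_G2 [simp]: "monoid.mult G2 = monoid.mult B2"
  by (simp add: G2_def)
lemma one_G2 [simp]: "monoid.one G2 = monoid.one B2"
  by (simp add: G2_def)
lemma grpG2: "group G2"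
  unfolding G2_def by (rule group.group_subgroup_generated[OF grpB2])

lemma triv:
  assumes g: "g \<in> carrier G3" and mk: "\<forall>s\<in>stickers3. mark (g s) = mark s"
    and fx: "\<forall>s\<in>stickers3. fst (g s) = fst s"
  shows "g = \<one>\<^bsub>B3\<^esub>"
proof (rule G3_ext[OF g G3_one])
  have A: "g (cst c) = cst c" if m: "mark (cst c)" for c
  proof -
    obtain c' where c': "g (cst c) = cst c'" using G3_in[OF g cst3] st3_cover by blast
    have "mark (cst c')" using mk c' m cst3 by metis
    then have "cst c' = markof (fst (cst c'))" using n6_facts by blast
    also have "fst (cst c') = fst (cst c)" using fx c' cst3 by metis
    also have "markof (fst (cst c)) = cst c" using n6_facts m by metis
    finally show ?thesis using c' by simp
  qed
  fix s assume "s \<in> stickers3"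
  then obtain c where c: "s = cst c" using st3_cover by blast
  obtain c' where c': "g (cst c) = cst c'" using G3_in[OF g cst3] st3_cover by blast
  have n1: "g (cst (nxtc c)) = cst (nxtc c')"
    using Inv_nxt[OF g cst3, of c] c' nxt_cst by metis
  have n2: "g (cst (nxtc (nxtc c))) = cst (nxtc (nxtc c'))"
    using Inv_nxt[OF g cst3, of "nxtc c"] n1 nxt_cst by metis
  have "c' = c"
  proof -
    have "mark (cst c) \<or> mark (cst (nxtc c)) \<or> mark (cst (nxtc (nxtc c)))" using n6_facts by blast
    then show ?thesis
    proof (elim disjE)
      assume "mark (cst c)" then show ?thesis using A c' cst_inj by metis
    next
      assume "mark (cst (nxtc c))" then show ?thesis using A n1 cst_inj nxtc_inj by metis
    next
      assume "mark (cst (nxtc (nxtc c)))" then show ?thesis using A n2 cst_inj nxtc_inj by metis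
    qed
  qed
  then show "g s = \<one>\<^bsub>B3\<^esub> s" using c c' by (simp add: oneB3 cst3)
qed

definition QG :: "(sticker \<Rightarrow> sticker) set" where
  "QG = (\<lambda>wp. wfun (fst wp)) ` set qpairs"

definition Qgrp :: "(sticker \<Rightarrow> sticker) set" where
  "Qgrp = generate G3 QG"

lemma QG_G3: "QG \<subseteq> carrier G3"
  unfolding QG_def using wfun_G3 by auto

lemma subQ: "subgroup Qgrp G3"
  unfolding Qgrp_def by (rule group.generate_is_subgroup[OF grpG3 QG_G3])

lemma Q_G3: "Qgrp \<subseteq> carrier G3"
  using subgroup.subset[OF subQ] .

lemma gq_inv: assumes wp: "(w,p) \<in> set qpairs"
  shows "wfun w \<otimes>\<^bsub>B3\<^esub> wfun w = \<one>\<^bsub>B3\<^esub>"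
proof (rule G3_ext)
  show "wfun w \<otimes>\<^bsub>B3\<^esub> wfun w \<in> carrier G3" using G3_m wfun_G3 by blast
  show "\<one>\<^bsub>B3\<^esub> \<in> carrier G3" by (rule G3_one)
  fix s assume "s \<in> stickers3"
  then obtain c where c: "s = cst c" using st3_cover by blast
  show "(wfun w \<otimes>\<^bsub>B3\<^esub> wfun w) s = \<one>\<^bsub>B3\<^esub> s"
    using gen_facts[OF wp, of c] by (simp add: c G3_mult_app wfun_G3 cst3 wfun_cst oneB3)
qed

lemma gq_mark: assumes wp: "(w,p) \<in> set qpairs"
  shows "\<forall>s\<in>stickers3. mark (wfun w s) = mark s"
proof
  fix s assume "s \<in> stickers3"
  then obtain c where c: "s = cst c" using st3_cover by blast
  show "mark (wfun w s) = mark s" using gen_facts[OF wp, of c] by (simp add: c wfun_cst)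
qed

lemma gq_cp: assumes wp: "(w,p) \<in> set qpairs"
  shows "pos_perm corner_pos (wfun w) = transpose c1v p"
proof
  fix q
  show "pos_perm corner_pos (wfun w) q = transpose c1v p q"
  proof (cases "q \<in> corner_pos")
    case True
    then obtain c where c: "fst (cst c) = q" using pos_sticker by blast
    have ic: "iscorner c" using True c corner_iff[OF cst3, of c] unfolding iscorner_def by blast
    have "pos_perm corner_pos (wfun w) (fst (cst c)) = fst (wfun w (cst c))"
      by (rule pp_at[OF wfun_G3 cst3]) (use True c in auto)
    then show ?thesis using gen_facts[OF wp, of c] ic c by (simp add: wfun_cst)
  next
    case False
    have "q \<noteq> c1v" "q \<noteq> p" using False c1_corner qc_corner[OF wp] by auto
    then show ?thesis using False by (simp add: pp_out transpose_def)
  qed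
qed

lemma gq_ep: assumes wp: "(w,p) \<in> set qpairs"
  shows "beta (wfun w) = transpose edge_b edge_c"
  unfolding beta_def
proof
  fix q
  show "pos_perm edge_pos (wfun w) q = transpose edge_b edge_c q"
  proof (cases "q \<in> edge_pos")
    case True
    then obtain c where c: "fst (cst c) = q" using pos_sticker by blast
    have ic: "\<not> iscorner c" using True c edge_iff[OF cst3, of c] unfolding iscorner_def by auto
    have "pos_perm edge_pos (wfun w) (fst (cst c)) = fst (wfun w (cst c))"
      by (rule pp_at[OF wfun_G3 cst3]) (use True c in auto)
    then show ?thesis using gen_facts[OF wp, of c] ic c by (simp add: wfun_cst)
  next
    case False
    have "q \<noteq> edge_b" "q \<noteq> edge_c" using False eb_edge ec_edge by auto
    then show ?thesis using False by (simp add: pp_out transpose_def)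
  qed
qed

lemma sigma_id: "sigma id = id"
  by (simp add: sigma_def)

lemma sigma_tr: "a \<noteq> b \<Longrightarrow> sigma (transpose a b) = transpose edge_b edge_c"
  by (simp add: sigma_def evenperm_swap)

lemma sigma_comp:
  assumes p: "p permutes corner_pos" and q: "q permutes corner_pos"
  shows "sigma (p \<circ> q) = sigma p \<circ> sigma q"
proof -
  have pp: "permutation p" "permutation q"
    using p q fin_corner permutation_permutes by blast+
  show ?thesis
    using evenperm_comp[OF pp] by (auto simp: sigma_def)
qed

definition QP :: "(sticker \<Rightarrow> sticker) \<Rightarrow> bool" where
  "QP g \<longleftrightarrow> (\<forall>s\<in>stickers3. mark (g s) = mark s) \<and> beta g = sigma (pos_perm corner_pos g)"

lemma QP_gen: assumes wp: "(w,p) \<in> set qpairs" shows "QP (wfun w)"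
  unfolding QP_def using gq_mark[OF wp] gq_ep[OF wp] gq_cp[OF wp] sigma_tr qc_corner[OF wp] by metis

lemma Q_prop: "q \<in> Qgrp \<Longrightarrow> q \<in> carrier G3 \<and> QP q"
  unfolding Qgrp_def
proof (induction rule: generate.induct)
  case one
  have "QP \<one>\<^bsub>B3\<^esub>" unfolding QP_def beta_def
    using pp_one sigma_id by (simp add: oneB3)
  then show ?case using G3_one by simp
next
  case (incl h)
  then obtain w p where wp: "(w,p) \<in> set qpairs" "h = wfun w" unfolding QG_def by auto
  then show ?case using QP_gen wfun_G3 by simp
next
  case (inv h)
  then obtain w p where wp: "(w,p) \<in> set qpairs" "h = wfun w" unfolding QG_def by auto
  have "inv\<^bsub>B3\<^esub> (wfun w) = wfun w"
    by (rule group.inv_equality[OF grpB3 gq_inv[OF wp(1)]]) (use wfun_G3 G3_Bij in \<open>auto simp: BijGroup_def\<close>)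
  then have "inv\<^bsub>G3\<^esub> h = h" using wp inv_G3 wfun_G3 by simp
  then show ?case using QP_gen[OF wp(1)] wp wfun_G3 by simp
next
  case (eng h1 h2)
  have h1: "h1 \<in> carrier G3" and h2: "h2 \<in> carrier G3" using eng by auto
  have q1: "QP h1" and q2: "QP h2" using eng by auto
  have mk: "\<forall>s\<in>stickers3. mark ((h1 \<otimes>\<^bsub>B3\<^esub> h2) s) = mark s"
    using q1 q2 G3_in[OF h2] unfolding QP_def by (simp add: G3_mult_app[OF h1 h2])
  have "beta (h1 \<otimes>\<^bsub>B3\<^esub> h2) = beta h1 \<circ> beta h2"
    unfolding beta_def by (rule pp_mult[OF h1 h2]) simp
  also have "\<dots> = sigma (pos_perm corner_pos h1) \<circ> sigma (pos_perm corner_pos h2)"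
    using q1 q2 unfolding QP_def by simp
  also have "\<dots> = sigma (pos_perm corner_pos h1 \<circ> pos_perm corner_pos h2)"
    using sigma_comp pp_permutes[OF h1] pp_permutes[OF h2] by simp
  also have "\<dots> = sigma (pos_perm corner_pos (h1 \<otimes>\<^bsub>B3\<^esub> h2))"
    using pp_mult[OF h1 h2] by simp
  finally have "QP (h1 \<otimes>\<^bsub>B3\<^esub> h2)" using mk unfolding QP_def by simp
  then show ?case using G3_m[OF h1 h2] by simp
qed

lemma fix_all:
  assumes g: "g \<in> carrier G3" and c: "pos_perm corner_pos g = id" and e: "beta g = id"
  shows "\<forall>s\<in>stickers3. fst (g s) = fst s"
proof
  fix s assume s: "s \<in> stickers3"
  show "fst (g s) = fst s"
  proof (cases "fst s \<in> corner_pos")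
    case True
    then show ?thesis using pp_at[OF g s _ True] c by simp
  next
    case False
    then have e2: "fst s \<in> edge_pos" using s by (auto simp: stickers3_def)
    show ?thesis using pp_at[OF g s _ e2] e by (simp add: beta_def)
  qed
qed

lemma alpha_one: "alpha \<one>\<^bsub>B3\<^esub> = (id, id)"
  unfolding alpha_def beta_def phi_psi using pp_one by simp

lemma Q_ker: "Qgrp \<inter> ker_alpha = {\<one>\<^bsub>G3\<^esub>}"
proof
  show "Qgrp \<inter> ker_alpha \<subseteq> {\<one>\<^bsub>G3\<^esub>}"
  proof
    fix q assume q: "q \<in> Qgrp \<inter> ker_alpha"
    then have qG: "q \<in> carrier G3" and qp: "QP q" using Q_prop by auto
    have "alpha q = (id, id)" using q by (simp add: ker_alpha_def)
    then have e: "beta q = id" and c: "pos_perm corner_pos q = id"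
      by (simp_all add: alpha_def phi_psi)
    have "q = \<one>\<^bsub>B3\<^esub>"
      by (rule triv[OF qG]) (use qp fix_all[OF qG c e] in \<open>auto simp: QP_def\<close>)
    then show "q \<in> {\<one>\<^bsub>G3\<^esub>}" by simp
  qed
  show "{\<one>\<^bsub>G3\<^esub>} \<subseteq> Qgrp \<inter> ker_alpha"
    using generate.one[of G3 QG] alpha_one G3_one
    by (simp add: Qgrp_def ker_alpha_def)
qed

lemma gen_reach: "a \<in> corner_pos \<Longrightarrow> a \<noteq> c1v \<Longrightarrow> \<exists>q\<in>Qgrp. pos_perm corner_pos q = transpose c1v a"
proof -
  assume a: "a \<in> corner_pos" "a \<noteq> c1v"
  then obtain w where wp: "(w,a) \<in> set qpairs" using corner_cover by blast
  have "wfun w \<in> QG" unfolding QG_def by (rule image_eqI[of _ _ "(w,a)"]) (use wp in auto)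
  then have "wfun w \<in> Qgrp" unfolding Qgrp_def by (rule generate.incl)
  then show ?thesis using gq_cp[OF wp] by blast
qed

lemma Q_mult: "x \<in> Qgrp \<Longrightarrow> y \<in> Qgrp \<Longrightarrow> x \<otimes>\<^bsub>B3\<^esub> y \<in> Qgrp"
  using subgroup.m_closed[OF subQ] by simp

lemma tr_reach:
  assumes a: "a \<in> corner_pos" and b: "b \<in> corner_pos" and ab: "a \<noteq> b"
  shows "\<exists>q\<in>Qgrp. pos_perm corner_pos q = transpose a b"
proof (cases "a = c1v")
  case True then show ?thesis using gen_reach[OF b] ab by auto
next
  case False
  note na = False
  show ?thesis
  proof (cases "b = c1v")
    case True then show ?thesis using gen_reach[OF a na] by (auto simp: transpose_commute)
  next
    case False
    obtain qa where qa: "qa \<in> Qgrp" "pos_perm corner_pos qa = transpose c1v a" using gen_reach[OF a na] by blast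
    obtain qb where qb: "qb \<in> Qgrp" "pos_perm corner_pos qb = transpose c1v b" using gen_reach[OF b False] by blast
    have G: "qa \<in> carrier G3" "qb \<in> carrier G3" using qa qb Q_G3 by auto
    have "pos_perm corner_pos (qa \<otimes>\<^bsub>B3\<^esub> qb \<otimes>\<^bsub>B3\<^esub> qa) = transpose c1v a \<circ> transpose c1v b \<circ> transpose c1v a"
      using pp_mult[OF G3_m[OF G] G(1)] pp_mult[OF G] qa qb by simp
    also have "\<dots> = transpose a c1v \<circ> transpose c1v b \<circ> transpose a c1v"
      by (simp add: transpose_commute)
    also have "\<dots> = transpose a b"
      by (rule transpose_comp_triple) (use ab False in auto)
    finally show ?thesis using Q_mult qa qb by blast
  qed
qed

lemma reach: assumes "p permutes corner_pos" shows "\<exists>q\<in>Qgrp. pos_perm corner_pos q = p"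
  using assms fin_corner
proof (induction rule: permutes_induct)
  case id
  have "\<one>\<^bsub>B3\<^esub> \<in> Qgrp" using generate.one[of G3 QG] by (simp add: Qgrp_def)
  moreover have "pos_perm corner_pos \<one>\<^bsub>B3\<^esub> = id" using pp_one by simp
  ultimately show ?case by (metis id_def)
next
  case (swap a b p)
  obtain q where q: "q \<in> Qgrp" "pos_perm corner_pos q = p" using swap by blast
  obtain t where t: "t \<in> Qgrp" "pos_perm corner_pos t = transpose a b" using tr_reach swap by blast
  have "pos_perm corner_pos (t \<otimes>\<^bsub>B3\<^esub> q) = transpose a b \<circ> p"
    using pp_mult[of t q corner_pos] q t Q_G3 by auto
  then show ?case using Q_mult q t by blast
qed

lemma alpha_Q: "alpha ` Qgrp = S_set"
proof
  show "alpha ` Qgrp \<subseteq> S_set"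
  proof
    fix x assume "x \<in> alpha ` Qgrp"
    then obtain q where q: "q \<in> Qgrp" "x = alpha q" by blast
    then have G: "q \<in> carrier G3" and qp: "QP q" using Q_prop by auto
    have "x = (sigma (pos_perm corner_pos q), pos_perm corner_pos q)"
      using q qp by (simp add: alpha_def phi_psi QP_def)
    then show "x \<in> S_set" using pp_permutes[OF G] by (auto simp: S_set_def)
  qed
  show "S_set \<subseteq> alpha ` Qgrp"
  proof
    fix x assume "x \<in> S_set"
    then obtain p where p: "p permutes corner_pos" "x = (sigma p, p)" by (auto simp: S_set_def)
    obtain q where q: "q \<in> Qgrp" "pos_perm corner_pos q = p" using reach[OF p(1)] by blast
    then have "QP q" using Q_prop by auto
    then have "alpha q = x" using q p by (simp add: alpha_def phi_psi QP_def)
    then show "x \<in> alpha ` Qgrp" using q by blast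
  qed
qed

lemma L_G3: "L_grp \<subseteq> carrier G3"
  unfolding L_grp_def by blast

lemma L_edge: "l \<in> L_grp \<Longrightarrow> s \<in> stickers3 \<Longrightarrow> fst s \<in> edge_pos \<Longrightarrow> l s = s"
  unfolding L_grp_def by blast
lemma L_corner: "l \<in> L_grp \<Longrightarrow> s \<in> stickers3 \<Longrightarrow> fst s \<in> corner_pos \<Longrightarrow> fst (l s) = fst s"
  unfolding L_grp_def by blast

lemma L_intro:
  assumes "l \<in> carrier G3" "\<And>s. s \<in> stickers3 \<Longrightarrow> fst s \<in> edge_pos \<Longrightarrow> l s = s"
    "\<And>s. s \<in> stickers3 \<Longrightarrow> fst s \<in> corner_pos \<Longrightarrow> fst (l s) = fst s"
  shows "l \<in> L_grp"
  unfolding L_grp_def using assms by blast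

lemma inv_app: assumes x: "x \<in> carrier G3" and s: "s \<in> stickers3"
  shows "x ((inv\<^bsub>B3\<^esub> x) s) = s"
proof -
  have xB: "x \<in> carrier B3" using x subgroup.subset[OF subG3] by blast
  have "(x \<otimes>\<^bsub>B3\<^esub> inv\<^bsub>B3\<^esub> x) s = \<one>\<^bsub>B3\<^esub> s" using group.r_inv[OF grpB3 xB] by simp
  then show ?thesis using G3_mult_app[OF x G3_inv[OF x] s] s by (simp add: oneB3)
qed

lemma subL: "subgroup L_grp G3"
proof (rule group.subgroupI[OF grpG3])
  show "L_grp \<subseteq> carrier G3" by (rule L_G3)
  have "\<one>\<^bsub>B3\<^esub> \<in> L_grp" by (rule L_intro[OF G3_one]) (auto simp: oneB3)
  then show "L_grp \<noteq> {}" by blast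
next
  fix a assume a: "a \<in> L_grp"
  have aG: "a \<in> carrier G3" using a L_G3 by blast
  let ?h = "inv\<^bsub>B3\<^esub> a"
  have hG: "?h \<in> carrier G3" using G3_inv[OF aG] .
  have "?h \<in> L_grp"
  proof (rule L_intro[OF hG])
    fix s assume s: "s \<in> stickers3" "fst s \<in> edge_pos"
    have hs: "?h s \<in> stickers3" "fst (?h s) \<in> edge_pos" using G3_in[OF hG s(1)] Inv_edge[OF hG s(1)] s by auto
    have "a (?h s) = ?h s" using L_edge[OF a hs] .
    then show "?h s = s" using inv_app[OF aG s(1)] by simp
  next
    fix s assume s: "s \<in> stickers3" "fst s \<in> corner_pos"
    have hs: "?h s \<in> stickers3" "fst (?h s) \<in> corner_pos" using G3_in[OF hG s(1)] Inv_corner[OF hG s(1)] s by auto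
    have "fst (a (?h s)) = fst (?h s)" using L_corner[OF a hs] .
    then show "fst (?h s) = fst s" using inv_app[OF aG s(1)] by simp
  qed
  then show "inv\<^bsub>G3\<^esub> a \<in> L_grp" using inv_G3[OF aG] by simp
next
  fix a b assume a: "a \<in> L_grp" and b: "b \<in> L_grp"
  have aG: "a \<in> carrier G3" and bG: "b \<in> carrier G3" using a b L_G3 by auto
  have "a \<otimes>\<^bsub>B3\<^esub> b \<in> L_grp"
  proof (rule L_intro[OF G3_m[OF aG bG]])
    fix s assume s: "s \<in> stickers3" "fst s \<in> edge_pos"
    then show "(a \<otimes>\<^bsub>B3\<^esub> b) s = s" using L_edge[OF a] L_edge[OF b] by (simp add: G3_mult_app[OF aG bG])
  next
    fix s assume s: "s \<in> stickers3" "fst s \<in> corner_pos"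
    have bs: "b s \<in> stickers3" "fst (b s) \<in> corner_pos" using G3_in[OF bG s(1)] L_corner[OF b s] s by auto
    show "fst ((a \<otimes>\<^bsub>B3\<^esub> b) s) = fst s" using L_corner[OF a bs] L_corner[OF b s] by (simp add: G3_mult_app[OF aG bG s(1)])
  qed
  then show "a \<otimes>\<^bsub>G3\<^esub> b \<in> L_grp" by simp
qed

lemma normL: "L_grp \<lhd> G3"
  unfolding group.normal_inv_iff[OF grpG3]
proof (intro conjI ballI)
  show "subgroup L_grp G3" by (rule subL)
  fix x h assume x: "x \<in> carrier G3" and h: "h \<in> L_grp"
  have hG: "h \<in> carrier G3" using h L_G3 by blast
  let ?y = "inv\<^bsub>B3\<^esub> x"
  have yG: "?y \<in> carrier G3" using G3_inv[OF x] .
  have eG: "x \<otimes>\<^bsub>B3\<^esub> h \<otimes>\<^bsub>B3\<^esub> ?y \<in> carrier G3" using G3_m[OF G3_m[OF x hG] yG] .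
  have ev: "(x \<otimes>\<^bsub>B3\<^esub> h \<otimes>\<^bsub>B3\<^esub> ?y) s = x (h (?y s))" if "s \<in> stickers3" for s
    using that by (simp add: G3_mult_app[OF G3_m[OF x hG] yG] G3_mult_app[OF x hG] G3_in[OF yG])
  have "x \<otimes>\<^bsub>B3\<^esub> h \<otimes>\<^bsub>B3\<^esub> ?y \<in> L_grp"
  proof (rule L_intro[OF eG])
    fix s assume s: "s \<in> stickers3" "fst s \<in> edge_pos"
    have ys: "?y s \<in> stickers3" "fst (?y s) \<in> edge_pos" using G3_in[OF yG s(1)] Inv_edge[OF yG s(1)] s by auto
    show "(x \<otimes>\<^bsub>B3\<^esub> h \<otimes>\<^bsub>B3\<^esub> ?y) s = s" using ev[OF s(1)] L_edge[OF h ys] inv_app[OF x s(1)] by simp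
  next
    fix s assume s: "s \<in> stickers3" "fst s \<in> corner_pos"
    have ys: "?y s \<in> stickers3" "fst (?y s) \<in> corner_pos" using G3_in[OF yG s(1)] Inv_corner[OF yG s(1)] s by auto
    have hys: "h (?y s) \<in> stickers3" using G3_in[OF hG ys(1)] .
    have "fst (x (h (?y s))) = fst (x (?y s))" by (rule Inv_cub[OF x hys ys(1) L_corner[OF h ys]])
    then show "fst ((x \<otimes>\<^bsub>B3\<^esub> h \<otimes>\<^bsub>B3\<^esub> ?y) s) = fst s" using ev[OF s(1)] inv_app[OF x s(1)] by simp
  qed
  then show "x \<otimes>\<^bsub>G3\<^esub> h \<otimes>\<^bsub>G3\<^esub> inv\<^bsub>G3\<^esub> x \<in> L_grp" using inv_G3[OF x] by simp
qed

definition LQ :: "(sticker \<Rightarrow> sticker) set" where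
  "LQ = L_grp <#>\<^bsub>G3\<^esub> Qgrp"

lemma subLQ: "subgroup LQ G3"
proof -
  interpret second_isomorphism_grp L_grp G3 Qgrp
    by (rule second_isomorphism_grp.intro[OF normL]) (rule second_isomorphism_grp_axioms.intro[OF subQ])
  show ?thesis unfolding LQ_def by (rule normal_set_mult_subgroup)
qed

lemma LQ_G3: "LQ \<subseteq> carrier G3"
  using subgroup.subset[OF subLQ] .

lemma one_Q: "\<one>\<^bsub>B3\<^esub> \<in> Qgrp"
  using generate.one[of G3 QG] by (simp add: Qgrp_def)

lemma one_L: "\<one>\<^bsub>B3\<^esub> \<in> L_grp"
  by (rule L_intro[OF G3_one]) (auto simp: oneB3)

lemma LQ_mem: "l \<in> L_grp \<Longrightarrow> q \<in> Qgrp \<Longrightarrow> l \<otimes>\<^bsub>B3\<^esub> q \<in> LQ"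
  unfolding LQ_def set_mult_def by auto

lemma LQ_elim: "x \<in> LQ \<Longrightarrow> \<exists>l\<in>L_grp. \<exists>q\<in>Qgrp. x = l \<otimes>\<^bsub>B3\<^esub> q"
  unfolding LQ_def set_mult_def by auto

lemma L_LQ: "L_grp \<subseteq> LQ"
proof
  fix l assume l: "l \<in> L_grp"
  have "l \<otimes>\<^bsub>B3\<^esub> \<one>\<^bsub>B3\<^esub> = l"
    using monoid.r_one[OF group.is_monoid[OF grpB3]] l L_G3 subgroup.subset[OF subG3] by blast
  then show "l \<in> LQ" using LQ_mem[OF l one_Q] by simp
qed

lemma normL_LQ: "L_grp \<lhd> G3\<lparr>carrier := LQ\<rparr>"
  by (rule group.normal_restrict_supergroup[OF grpG3 subLQ normL L_LQ])

lemma LQ_int: "L_grp \<inter> Qgrp = {\<one>\<^bsub>G3\<^esub>}"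
proof
  show "L_grp \<inter> Qgrp \<subseteq> {\<one>\<^bsub>G3\<^esub>}"
  proof
    fix q assume q: "q \<in> L_grp \<inter> Qgrp"
    then have qG: "q \<in> carrier G3" and qp: "QP q" using Q_prop by auto
    have fx: "\<forall>s\<in>stickers3. fst (q s) = fst s"
    proof
      fix s assume s: "s \<in> stickers3"
      show "fst (q s) = fst s"
      proof (cases "fst s \<in> corner_pos")
        case True then show ?thesis using L_corner q s by blast
      next
        case False then have "fst s \<in> edge_pos" using s by (auto simp: stickers3_def)
        then show ?thesis using L_edge[of q s] q s by simp
      qed
    qed
    have "q = \<one>\<^bsub>B3\<^esub>" by (rule triv[OF qG _ fx]) (use qp in \<open>simp add: QP_def\<close>)
    then show "q \<in> {\<one>\<^bsub>G3\<^esub>}" by simp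
  qed
  show "{\<one>\<^bsub>G3\<^esub>} \<subseteq> L_grp \<inter> Qgrp" using one_L one_Q by simp
qed

lemma cp_L: assumes l: "l \<in> L_grp" shows "pos_perm corner_pos l = id"
proof
  fix p
  show "pos_perm corner_pos l p = id p"
  proof (cases "p \<in> corner_pos")
    case True
    then obtain s where s: "s \<in> stickers3" "fst s = p" using st3_of_pos by blast
    have lG: "l \<in> carrier G3" using l L_G3 by blast
    show ?thesis using pp_at[OF lG s(1) _ ] True s L_corner[OF l s(1)] by simp
  next
    case False then show ?thesis by (simp add: pp_out)
  qed
qed

lemma phi_one2: "phi \<one>\<^bsub>B2\<^esub> = id"
  using phi_psi[of "\<one>\<^bsub>B3\<^esub>"] psi_one pp_one by simp

lemma psi_kernel: assumes x: "x \<in> LQ" and px: "psi x = \<one>\<^bsub>B2\<^esub>" shows "x = \<one>\<^bsub>B3\<^esub>"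
proof -
  obtain l q where l: "l \<in> L_grp" and q: "q \<in> Qgrp" and xlq: "x = l \<otimes>\<^bsub>B3\<^esub> q"
    using LQ_elim[OF x] by blast
  have lG: "l \<in> carrier G3" and qG: "q \<in> carrier G3" using l q L_G3 Q_G3 by auto
  have qp: "QP q" using Q_prop q by blast
  have "pos_perm corner_pos x = id" using px phi_psi[of x] phi_one2 by simp
  then have cq: "pos_perm corner_pos q = id" using pp_mult[OF lG qG] cp_L[OF l] xlq by simp
  then have "beta q = id" using qp sigma_id by (simp add: QP_def)
  then have "alpha q = (id, id)" using cq by (simp add: alpha_def phi_psi)
  then have "q \<in> Qgrp \<inter> ker_alpha" using q qG by (simp add: ker_alpha_def)
  then have "q = \<one>\<^bsub>B3\<^esub>" using Q_ker by simp
  then have xl: "x = l" using xlq monoid.r_one[OF group.is_monoid[OF grpB3]] lG subgroup.subset[OF subG3] by auto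
  show ?thesis
  proof (rule G3_ext[OF _ G3_one])
    show "x \<in> carrier G3" using xl lG by simp
    fix s assume s: "s \<in> stickers3"
    show "x s = \<one>\<^bsub>B3\<^esub> s"
    proof (cases "fst s \<in> corner_pos")
      case True
      then have s2: "s \<in> stickers2" using s corner_iff st2_eq by blast
      have "psi x s = \<one>\<^bsub>B2\<^esub> s" using px by simp
      then show ?thesis using s2 s by (simp add: psi_app oneB2 oneB3)
    next
      case False then have "fst s \<in> edge_pos" using s by (auto simp: stickers3_def)
      then show ?thesis using L_edge[of l s] l s xl by (simp add: oneB3)
    qed
  qed
qed

lemma LQ_m: "x \<in> LQ \<Longrightarrow> y \<in> LQ \<Longrightarrow> x \<otimes>\<^bsub>B3\<^esub> y \<in> LQ"
  using subgroup.m_closed[OF subLQ] by simp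

lemma LQ_inv: "x \<in> LQ \<Longrightarrow> inv\<^bsub>B3\<^esub> x \<in> LQ"
  using subgroup.m_inv_closed[OF subLQ] inv_G3 LQ_G3 by fastforce

lemma psi_inj: "inj_on psi LQ"
proof
  fix x y assume x: "x \<in> LQ" and y: "y \<in> LQ" and e: "psi x = psi y"
  have xG: "x \<in> carrier G3" and yG: "y \<in> carrier G3" using x y LQ_G3 by auto
  have xB: "x \<in> carrier B3" and yB: "y \<in> carrier B3" using xG yG subgroup.subset[OF subG3] by auto
  let ?z = "x \<otimes>\<^bsub>B3\<^esub> inv\<^bsub>B3\<^esub> y"
  have z: "?z \<in> LQ" using LQ_m[OF x LQ_inv[OF y]] .
  have "psi ?z = psi x \<otimes>\<^bsub>B2\<^esub> psi (inv\<^bsub>B3\<^esub> y)" using psi_mult[OF xG G3_inv[OF yG]] .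
  also have "\<dots> = psi (y \<otimes>\<^bsub>B3\<^esub> inv\<^bsub>B3\<^esub> y)" using psi_mult[OF yG G3_inv[OF yG]] e by simp
  also have "\<dots> = \<one>\<^bsub>B2\<^esub>" using group.r_inv[OF grpB3 yB] psi_one by simp
  finally have "?z = \<one>\<^bsub>B3\<^esub>" using psi_kernel[OF z] by simp
  then have "inv\<^bsub>B3\<^esub> (inv\<^bsub>B3\<^esub> y) = x"
    by (rule group.inv_equality[OF grpB3 _ group.inv_closed[OF grpB3 yB] xB])
  then show "x = y" using group.inv_inv[OF grpB3 yB] by simp
qed

lemma concat_Q: "set ws \<subseteq> fst ` set qpairs \<Longrightarrow> wfun (concat ws) \<in> Qgrp"
proof (induction ws)
  case Nil then show ?case using one_Q by simp
next
  case (Cons w ws)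
  then obtain p where wp: "(w,p) \<in> set qpairs" by auto
  have "wfun w \<in> QG" unfolding QG_def by (rule image_eqI[of _ _ "(w,p)"]) (use wp in auto)
  then have "wfun w \<in> Qgrp" unfolding Qgrp_def by (rule generate.incl)
  then show ?case using Cons Q_mult by (simp add: wfun_append)
qed

lemma swm_sub: "set (swm m) \<subseteq> fst ` set qpairs"
  by (cases m) (simp_all add: qpairs_def)

lemma gl_facts: "if iscorner c then fst (cst (app_word (lwm m) c)) = fst (cst c) \<and> app_word (lwm m @ concat (swm m)) c = mvc m c else app_word (lwm m) c = c"
proof (cases m)
  case NU then show ?thesis using la_allc2[OF GLU, of c] by (simp add: app_word_append app_q0 app_q1 app_q2 app_q3 app_q4 app_q5 app_q6 app_lU)
next
  case ND then show ?thesis using la_allc2[OF GLD, of c] by (simp add: app_word_append app_q0 app_q1 app_q2 app_q3 app_q4 app_q5 app_q6 app_lD)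
next
  case NF then show ?thesis using la_allc2[OF GLF, of c] by (simp add: app_word_append app_q0 app_q1 app_q2 app_q3 app_q4 app_q5 app_q6 app_lF)
next
  case NB then show ?thesis using la_allc2[OF GLB, of c] by (simp add: app_word_append app_q0 app_q1 app_q2 app_q3 app_q4 app_q5 app_q6 app_lB)
next
  case NL then show ?thesis using la_allc2[OF GLL, of c] by (simp add: app_word_append app_q0 app_q1 app_q2 app_q3 app_q4 app_q5 app_q6 app_lL)
next
  case NR then show ?thesis using la_allc2[OF GLR, of c] by (simp add: app_word_append app_q0 app_q1 app_q2 app_q3 app_q4 app_q5 app_q6 app_lR)
qed

lemma lw_L: "wfun (lwm m) \<in> L_grp"
proof (rule L_intro[OF wfun_G3])
  fix s assume s: "s \<in> stickers3" "fst s \<in> edge_pos"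
  then obtain c where c: "s = cst c" using st3_cover by blast
  have "\<not> iscorner c" using s c edge_iff[OF cst3, of c] unfolding iscorner_def by simp
  then show "wfun (lwm m) s = s" using gl_facts[of c m] c by (simp add: wfun_cst)
next
  fix s assume s: "s \<in> stickers3" "fst s \<in> corner_pos"
  then obtain c where c: "s = cst c" using st3_cover by blast
  have "iscorner c" using s c corner_iff[OF cst3, of c] unfolding iscorner_def by simp
  then show "fst (wfun (lwm m) s) = fst s" using gl_facts[of c m] c by (simp add: wfun_cst)
qed

lemma zm: "\<exists>z\<in>LQ. psi z = psi (face_move stickers3 (axm m))"
proof
  let ?z = "wfun (lwm m) \<otimes>\<^bsub>B3\<^esub> wfun (concat (swm m))"
  show "?z \<in> LQ" by (rule LQ_mem[OF lw_L concat_Q[OF swm_sub]])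
  show "psi ?z = psi (face_move stickers3 (axm m))"
  proof
    fix s
    show "psi ?z s = psi (face_move stickers3 (axm m)) s"
    proof (cases "s \<in> stickers2")
      case True
      then have s3: "s \<in> stickers3" and n3: "nonzeros (fst s) = 3" using st2_eq by auto
      then obtain c where c: "s = cst c" using st3_cover by blast
      have ic: "iscorner c" using n3 c by (simp add: iscorner_def)
      have "?z s = cst (app_word (lwm m @ concat (swm m)) c)"
        by (simp add: c wfun_append[symmetric] wfun_cst)
      also have "\<dots> = cst (mvc m c)" using gl_facts[of c m] ic by simp
      finally show ?thesis using True c by (simp add: psi_app fm_cst)
    next
      case False then show ?thesis by (simp add: psi_def)
    qed
  qed
qed

lemma psi_surj: "psi ` LQ = carrier G2"
proof
  show "psi ` LQ \<subseteq> carrier G2" using LQ_G3 carrier_G2 by auto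
  have "\<exists>z\<in>LQ. psi z = psi g" if g: "g \<in> carrier G3" for g
    using g
  proof (induction rule: G3_induct)
    case one
    have "\<one>\<^bsub>B3\<^esub> \<in> LQ" using L_LQ one_L by blast
    then show ?case by blast
  next
    case (move m) then show ?case by (rule zm)
  next
    case (mult x y)
    then obtain zx zy where zx: "zx \<in> LQ" "psi zx = psi x" and zy: "zy \<in> LQ" "psi zy = psi y" by blast
    have zG: "zx \<in> carrier G3" "zy \<in> carrier G3" using zx(1) zy(1) LQ_G3 by auto
    have "psi (zx \<otimes>\<^bsub>B3\<^esub> zy) = psi zx \<otimes>\<^bsub>B2\<^esub> psi zy" by (rule psi_mult[OF zG])
    also have "\<dots> = psi x \<otimes>\<^bsub>B2\<^esub> psi y" using zx zy by simp
    also have "\<dots> = psi (x \<otimes>\<^bsub>B3\<^esub> y)" by (rule psi_mult[OF mult(1,2), symmetric])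
    finally have "psi (zx \<otimes>\<^bsub>B3\<^esub> zy) = psi (x \<otimes>\<^bsub>B3\<^esub> y)" .
    then show ?case using LQ_m[OF zx(1) zy(1)] by blast
  qed
  note A = this
  show "carrier G2 \<subseteq> psi ` LQ"
  proof
    fix h assume "h \<in> carrier G2"
    then obtain g where g: "g \<in> carrier G3" "h = psi g" using carrier_G2 by blast
    obtain z where "z \<in> LQ" "psi z = psi g" using A[OF g(1)] by blast
    then show "h \<in> psi ` LQ" using g(2) by (metis image_eqI)
  qed
qed

lemma psi_iso: "psi \<in> iso (G3\<lparr>carrier := LQ\<rparr>) G2"
  unfolding iso_def
proof (intro CollectI conjI)
  show "psi \<in> hom (G3\<lparr>carrier := LQ\<rparr>) G2"
    unfolding hom_def
  proof (intro CollectI conjI ballI)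
    show "psi \<in> carrier (G3\<lparr>carrier := LQ\<rparr>) \<rightarrow> carrier G2" using psi_surj by auto
    fix x y assume "x \<in> carrier (G3\<lparr>carrier := LQ\<rparr>)" "y \<in> carrier (G3\<lparr>carrier := LQ\<rparr>)"
    then have "x \<in> carrier G3" "y \<in> carrier G3" using LQ_G3 by auto
    then show "psi (x \<otimes>\<^bsub>G3\<lparr>carrier := LQ\<rparr>\<^esub> y) = psi x \<otimes>\<^bsub>G2\<^esub> psi y"
      by (simp add: psi_mult)
  qed
  show "bij_betw psi (carrier (G3\<lparr>carrier := LQ\<rparr>)) (carrier G2)"
    using psi_inj psi_surj by (simp add: bij_betw_def)
qed

theorem theorem3p10:
  shows "(\<exists>Q. subgroup Q G3 \<and> Q \<inter> ker_alpha = {\<one>\<^bsub>G3\<^esub>} \<and> alpha ` Q = S_set \<and>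
            subgroup (L_grp <#>\<^bsub>G3\<^esub> Q) G3 \<and>
            L_grp \<lhd> G3\<lparr>carrier := L_grp <#>\<^bsub>G3\<^esub> Q\<rparr> \<and>
            L_grp \<inter> Q = {\<one>\<^bsub>G3\<^esub>} \<and>
            psi \<in> iso (G3\<lparr>carrier := L_grp <#>\<^bsub>G3\<^esub> Q\<rparr>) G2)
       \<and> (\<exists>s. s \<in> hom G2 G3 \<and> (\<forall>x \<in> carrier G2. psi (s x) = x))
       \<and> (\<exists>K. subgroup K G3 \<and> G2 \<cong> G3\<lparr>carrier := K\<rparr>)"
proof -
  have grpR: "group (G3\<lparr>carrier := LQ\<rparr>)" by (rule subgroup.subgroup_is_group[OF subLQ grpG3])
  have inv_iso: "inv_into LQ psi \<in> iso G2 (G3\<lparr>carrier := LQ\<rparr>)"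
    using group.iso_set_sym[OF grpR psi_iso] by simp
  have P1: "\<exists>Q. subgroup Q G3 \<and> Q \<inter> ker_alpha = {\<one>\<^bsub>G3\<^esub>} \<and> alpha ` Q = S_set \<and>
            subgroup (L_grp <#>\<^bsub>G3\<^esub> Q) G3 \<and>
            L_grp \<lhd> G3\<lparr>carrier := L_grp <#>\<^bsub>G3\<^esub> Q\<rparr> \<and>
            L_grp \<inter> Q = {\<one>\<^bsub>G3\<^esub>} \<and>
            psi \<in> iso (G3\<lparr>carrier := L_grp <#>\<^bsub>G3\<^esub> Q\<rparr>) G2"
    using subQ Q_ker alpha_Q subLQ normL_LQ LQ_int psi_iso unfolding LQ_def by blast
  have P2: "\<exists>s. s \<in> hom G2 G3 \<and> (\<forall>x \<in> carrier G2. psi (s x) = x)"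
  proof (intro exI conjI ballI)
    have h: "inv_into LQ psi \<in> hom G2 (G3\<lparr>carrier := LQ\<rparr>)" using inv_iso by (simp add: iso_def)
    then show "inv_into LQ psi \<in> hom G2 G3"
      using LQ_G3 unfolding hom_def by auto
    fix x assume "x \<in> carrier G2"
    then show "psi (inv_into LQ psi x) = x" using psi_surj f_inv_into_f by metis
  qed
  have P3: "\<exists>K. subgroup K G3 \<and> G2 \<cong> G3\<lparr>carrier := K\<rparr>"
    using subLQ inv_iso is_isoI by blast
  show ?thesis using P1 P2 P3 by blast
qed

end
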